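(* Let $k,d\geqslant 1$ be integers and let $L$ be a $\mathbb{Z}_p$-Lie lattice of dimension $d+1$ that admits a $d$-dimensional abelian ideal. Then $L$ is self-similar of index $p^{dk}$.
   Context: $p$ is any prime. A $\mathbb{Z}_p$-Lie lattice is a $\mathbb{Z}_p$-Lie algebra whose underlying module is finitely generated and free; dimension means rank. A virtual endomorphism of $L$ is a homomorphism of algebras $\varphi:M\to L$ with $M\subseteq L$ a finite-index subalgebra, of index $[L:M]$. An ideal $I$ of $L$ is $\varphi$-invariant if it is contained in the domain of every power of $\varphi$ and $\varphi(I)\subseteq I$; $\varphi$ is simple if no non-zero ideal of $L$ is $\varphi$-invariant. $L$ is self-similar of index $p^k$ if there is a simple virtual endomorphism of $L$ of index $p^k$. *)

theory Defs
  imports "HOL-Algebra.Module" "HOL-Algebra.AbelCoset" "HOL-Computational_Algebra.Primes"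
begin

text \<open>The p-adic integers Z_p, realised concretely as the inverse limit of the rings
  Z/p^n Z: an element is a compatible sequence of residues x n in [0, p^n).\<close>
definition Zp :: "nat \<Rightarrow> (nat \<Rightarrow> int) ring" where
  "Zp p = \<lparr>carrier = {x. \<forall>n. 0 \<le> x n \<and> x n < int p ^ n \<and> x (Suc n) mod (int p ^ n) = x n},
           monoid.mult = (\<lambda>x y n. (x n * y n) mod (int p ^ n)),
           one = (\<lambda>n. 1 mod (int p ^ n)),
           zero = (\<lambda>n. 0),
           add = (\<lambda>x y n. (x n + y n) mod (int p ^ n))\<rparr>"

definition lie_algebra ::
  "('r, 'm) ring_scheme \<Rightarrow> ('r, 'a) module \<Rightarrow> ('a \<Rightarrow> 'a \<Rightarrow> 'a) \<Rightarrow> bool" where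
  "lie_algebra R L br \<longleftrightarrow> module R L \<and>
     (\<forall>x\<in>carrier L. \<forall>y\<in>carrier L. br x y \<in> carrier L) \<and>
     (\<forall>x\<in>carrier L. \<forall>y\<in>carrier L. \<forall>z\<in>carrier L.
        br (x \<oplus>\<^bsub>L\<^esub> y) z = br x z \<oplus>\<^bsub>L\<^esub> br y z \<and>
        br x (y \<oplus>\<^bsub>L\<^esub> z) = br x y \<oplus>\<^bsub>L\<^esub> br x z) \<and>
     (\<forall>a\<in>carrier R. \<forall>x\<in>carrier L. \<forall>y\<in>carrier L.
        br (a \<odot>\<^bsub>L\<^esub> x) y = a \<odot>\<^bsub>L\<^esub> br x y \<and>
        br x (a \<odot>\<^bsub>L\<^esub> y) = a \<odot>\<^bsub>L\<^esub> br x y) \<and>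
     (\<forall>x\<in>carrier L. br x x = \<zero>\<^bsub>L\<^esub>) \<and>
     (\<forall>x\<in>carrier L. \<forall>y\<in>carrier L. \<forall>z\<in>carrier L.
        br x (br y z) \<oplus>\<^bsub>L\<^esub> br y (br z x) \<oplus>\<^bsub>L\<^esub> br z (br x y) = \<zero>\<^bsub>L\<^esub>)"

definition is_basis ::
  "('r, 'm) ring_scheme \<Rightarrow> ('r, 'a) module \<Rightarrow> 'a set \<Rightarrow> nat \<Rightarrow> (nat \<Rightarrow> 'a) \<Rightarrow> bool" where
  "is_basis R L S n b \<longleftrightarrow> (\<forall>i<n. b i \<in> S) \<and>
     (\<forall>x\<in>S. \<exists>!c. c \<in> {..<n} \<rightarrow>\<^sub>E carrier R \<and>
        x = finsum L (\<lambda>i. c i \<odot>\<^bsub>L\<^esub> b i) {..<n})"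

definition free_rank ::
  "('r, 'm) ring_scheme \<Rightarrow> ('r, 'a) module \<Rightarrow> 'a set \<Rightarrow> nat \<Rightarrow> bool" where
  "free_rank R L S n \<longleftrightarrow> submodule S R L \<and> (\<exists>b. is_basis R L S n b)"

definition lie_lattice :: "nat \<Rightarrow> (nat \<Rightarrow> int, 'a) module \<Rightarrow> ('a \<Rightarrow> 'a \<Rightarrow> 'a) \<Rightarrow> nat \<Rightarrow> bool" where
  "lie_lattice p L br n \<longleftrightarrow> prime p \<and> lie_algebra (Zp p) L br \<and> free_rank (Zp p) L (carrier L) n"

definition lie_subalgebra ::
  "('r, 'm) ring_scheme \<Rightarrow> ('r, 'a) module \<Rightarrow> ('a \<Rightarrow> 'a \<Rightarrow> 'a) \<Rightarrow> 'a set \<Rightarrow> bool" where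
  "lie_subalgebra R L br M \<longleftrightarrow> submodule M R L \<and> (\<forall>x\<in>M. \<forall>y\<in>M. br x y \<in> M)"

definition lie_ideal ::
  "('r, 'm) ring_scheme \<Rightarrow> ('r, 'a) module \<Rightarrow> ('a \<Rightarrow> 'a \<Rightarrow> 'a) \<Rightarrow> 'a set \<Rightarrow> bool" where
  "lie_ideal R L br I \<longleftrightarrow> submodule I R L \<and> (\<forall>x\<in>carrier L. \<forall>y\<in>I. br x y \<in> I)"

definition abelian_subset :: "('r, 'a) module \<Rightarrow> ('a \<Rightarrow> 'a \<Rightarrow> 'a) \<Rightarrow> 'a set \<Rightarrow> bool" where
  "abelian_subset L br A \<longleftrightarrow> (\<forall>x\<in>A. \<forall>y\<in>A. br x y = \<zero>\<^bsub>L\<^esub>)"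

definition lattice_index :: "('r, 'a) module \<Rightarrow> 'a set \<Rightarrow> nat" where
  "lattice_index L M = card (a_rcosets\<^bsub>L\<^esub> M)"

definition virtual_endo ::
  "('r, 'm) ring_scheme \<Rightarrow> ('r, 'a) module \<Rightarrow> ('a \<Rightarrow> 'a \<Rightarrow> 'a) \<Rightarrow> 'a set \<Rightarrow> ('a \<Rightarrow> 'a) \<Rightarrow> bool" where
  "virtual_endo R L br M \<phi> \<longleftrightarrow> lie_subalgebra R L br M \<and> finite (a_rcosets\<^bsub>L\<^esub> M) \<and>
     (\<forall>x\<in>M. \<phi> x \<in> carrier L) \<and>
     (\<forall>x\<in>M. \<forall>y\<in>M. \<phi> (x \<oplus>\<^bsub>L\<^esub> y) = \<phi> x \<oplus>\<^bsub>L\<^esub> \<phi> y) \<and>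
     (\<forall>a\<in>carrier R. \<forall>x\<in>M. \<phi> (a \<odot>\<^bsub>L\<^esub> x) = a \<odot>\<^bsub>L\<^esub> \<phi> x) \<and>
     (\<forall>x\<in>M. \<forall>y\<in>M. \<phi> (br x y) = br (\<phi> x) (\<phi> y))"

fun pow_dom :: "('r, 'a) module \<Rightarrow> 'a set \<Rightarrow> ('a \<Rightarrow> 'a) \<Rightarrow> nat \<Rightarrow> 'a set" where
  "pow_dom L M \<phi> 0 = carrier L"
| "pow_dom L M \<phi> (Suc n) = {x \<in> M. \<phi> x \<in> pow_dom L M \<phi> n}"

definition phi_invariant :: "('r, 'a) module \<Rightarrow> 'a set \<Rightarrow> ('a \<Rightarrow> 'a) \<Rightarrow> 'a set \<Rightarrow> bool" where
  "phi_invariant L M \<phi> I \<longleftrightarrow> (\<forall>n. I \<subseteq> pow_dom L M \<phi> n) \<and> \<phi> ` I \<subseteq> I"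

definition simple_virtual_endo ::
  "('r, 'm) ring_scheme \<Rightarrow> ('r, 'a) module \<Rightarrow> ('a \<Rightarrow> 'a \<Rightarrow> 'a) \<Rightarrow> 'a set \<Rightarrow> ('a \<Rightarrow> 'a) \<Rightarrow> bool" where
  "simple_virtual_endo R L br M \<phi> \<longleftrightarrow> virtual_endo R L br M \<phi> \<and>
     (\<forall>I. lie_ideal R L br I \<and> phi_invariant L M \<phi> I \<longrightarrow> I = {\<zero>\<^bsub>L\<^esub>})"

definition self_similar_of_index ::
  "nat \<Rightarrow> (nat \<Rightarrow> int, 'a) module \<Rightarrow> ('a \<Rightarrow> 'a \<Rightarrow> 'a) \<Rightarrow> nat \<Rightarrow> bool" where
  "self_similar_of_index p L br N \<longleftrightarrow>
     (\<exists>M \<phi>. simple_virtual_endo (Zp p) L br M \<phi> \<and> lattice_index L M = N)"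

end

theory Submission
  imports Defs
begin

definition pe :: "nat \<Rightarrow> nat \<Rightarrow> nat \<Rightarrow> int" where
  "pe p m = (\<lambda>n. int p ^ m mod int p ^ n)"

lemma Zp_carrier: "x \<in> carrier (Zp p) \<longleftrightarrow> (\<forall>n. 0 \<le> x n \<and> x n < int p ^ n \<and> x (Suc n) mod int p ^ n = x n)"
  by (simp add: Zp_def)
lemma Zp_mult: "x \<otimes>\<^bsub>Zp p\<^esub> y = (\<lambda>n. (x n * y n) mod (int p ^ n))"
  by (simp add: Zp_def)
lemma Zp_add: "x \<oplus>\<^bsub>Zp p\<^esub> y = (\<lambda>n. (x n + y n) mod (int p ^ n))"
  by (simp add: Zp_def)
lemma Zp_zero: "\<zero>\<^bsub>Zp p\<^esub> = (\<lambda>n. 0)"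
  by (simp add: Zp_def)
lemma Zp_one: "\<one>\<^bsub>Zp p\<^esub> = (\<lambda>n. 1 mod (int p ^ n))"
  by (simp add: Zp_def)

context fixes p :: nat assumes p_prime: "prime p" and Zp_cring: "cring (Zp p)"
begin

interpretation R: cring "Zp p" by (rule Zp_cring)

lemma p_gt1: "int p > 1" using p_prime prime_gt_1_nat by auto

lemma Zp_compat: "x \<in> carrier (Zp p) \<Longrightarrow> x (n + j) mod int p ^ n = x n"
proof (induction j)
  case 0 then show ?case by (auto simp: Zp_carrier intro: mod_pos_pos_trivial)
next
  case (Suc j)
  have "x (n + Suc j) mod int p ^ n = (x (Suc (n + j)) mod int p ^ (n+j)) mod int p ^ n"
    by (simp add: mod_mod_cancel le_imp_power_dvd)
  also have "\<dots> = x (n+j) mod int p ^ n" using Suc.prems by (simp add: Zp_carrier)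
  finally show ?case using Suc by simp
qed

lemma Zp_compat_le: "x \<in> carrier (Zp p) \<Longrightarrow> n \<le> m \<Longrightarrow> x m mod int p ^ n = x n"
  using Zp_compat[of x n "m - n"] by (metis le_add_diff_inverse)

lemma Zp_bounds: "x \<in> carrier (Zp p) \<Longrightarrow> 0 \<le> x n \<and> x n < int p ^ n"
  unfolding Zp_carrier by blast

lemma Zp_zero_at0: assumes "x \<in> carrier (Zp p)" shows "x 0 = 0"
  using Zp_bounds[OF assms, of 0] by simp

lemma Zp_eqI: assumes x: "x \<in> carrier (Zp p)" and y: "y \<in> carrier (Zp p)"
  and h: "\<And>n. x n mod int p ^ n = y n mod int p ^ n" shows "x = y"
proof (rule ext)
  fix n
  have "x n mod int p ^ n = x n" "y n mod int p ^ n = y n"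
    using Zp_bounds[OF x, of n] Zp_bounds[OF y, of n] mod_pos_pos_trivial by blast+
  then show "x n = y n" using h[of n] by argo
qed

lemma pe_carrier: "pe p m \<in> carrier (Zp p)"
  unfolding Zp_carrier pe_def using p_gt1
  by (auto simp: mod_mod_cancel le_imp_power_dvd)

lemma pe_pow: "pe p 1 [^]\<^bsub>Zp p\<^esub> m = pe p m"
proof (induction m)
  case 0 then show ?case by (simp add: pe_def Zp_one)
next
  case (Suc m)
  show ?case unfolding R.nat_pow_Suc Suc Zp_mult
    by (auto simp: pe_def mod_mult_eq power_Suc mult.commute)
qed

lemma a_inv_at: "y \<in> carrier (Zp p) \<Longrightarrow> (y n + (\<ominus>\<^bsub>Zp p\<^esub> y) n) mod int p ^ n = 0"
proof -
  assume y: "y \<in> carrier (Zp p)"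
  have "y \<oplus>\<^bsub>Zp p\<^esub> (\<ominus>\<^bsub>Zp p\<^esub> y) = \<zero>\<^bsub>Zp p\<^esub>" using y by (rule R.r_neg)
  then show ?thesis unfolding Zp_add Zp_zero by (metis)
qed

lemma minus_at: "x \<in> carrier (Zp p) \<Longrightarrow> y \<in> carrier (Zp p) \<Longrightarrow>
   (x \<ominus>\<^bsub>Zp p\<^esub> y) n = (x n - y n) mod int p ^ n"
proof -
  assume x: "x \<in> carrier (Zp p)" and y: "y \<in> carrier (Zp p)"
  have "(x \<ominus>\<^bsub>Zp p\<^esub> y) n = (x n + (\<ominus>\<^bsub>Zp p\<^esub> y) n) mod int p ^ n"
    by (simp add: a_minus_def Zp_add)
  also have "\<dots> = (x n - y n + (y n + (\<ominus>\<^bsub>Zp p\<^esub> y) n)) mod int p ^ n" by simp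
  also have "\<dots> = (x n - y n + (y n + (\<ominus>\<^bsub>Zp p\<^esub> y) n) mod int p ^ n) mod int p ^ n"
    by (simp add: mod_add_right_eq)
  also have "\<dots> = (x n - y n) mod int p ^ n" using a_inv_at[OF y] by simp
  finally show ?thesis .
qed

lemma pe_mult_at: "(pe p m \<otimes>\<^bsub>Zp p\<^esub> y) n = (int p ^ m * y n) mod int p ^ n"
  by (simp add: Zp_mult pe_def mod_mult_left_eq)

lemma dvd_iff: assumes x: "x \<in> carrier (Zp p)"
  shows "(\<exists>y\<in>carrier (Zp p). x = pe p m \<otimes>\<^bsub>Zp p\<^esub> y) \<longleftrightarrow> x m = 0"
proof
  assume "\<exists>y\<in>carrier (Zp p). x = pe p m \<otimes>\<^bsub>Zp p\<^esub> y"
  then obtain y where "x = pe p m \<otimes>\<^bsub>Zp p\<^esub> y" by blast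
  then show "x m = 0" by (simp add: pe_mult_at)
next
  assume x0: "x m = 0"
  define y where "y = (\<lambda>n. x (n + m) div int p ^ m)"
  have pm: "int p ^ m > 0" using p_gt1 by simp
  have dv: "int p ^ m dvd x (n + m)" for n
  proof -
    have "x (m + n) mod int p ^ m = x m" by (rule Zp_compat[OF x])
    then show ?thesis using x0 by (simp add: add.commute mod_eq_0_iff_dvd)
  qed
  have yc: "y \<in> carrier (Zp p)"
    unfolding Zp_carrier
  proof (intro allI conjI)
    fix n
    show "0 \<le> y n" using Zp_bounds[OF x, of "n+m"] pm by (simp add: y_def pos_imp_zdiv_nonneg_iff)
    show "y n < int p ^ n"
    proof -
      have "x (n+m) < int p ^ m * int p ^ n" using Zp_bounds[OF x, of "n+m"] by (simp add: power_add mult.commute)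
      moreover have "x (n+m) div int p ^ m * int p ^ m \<le> x (n+m)"
        using minus_mod_eq_div_mult[of "x (n+m)" "int p ^ m"] pos_mod_sign[OF pm, of "x (n+m)"] by linarith
      ultimately have "x (n+m) div int p ^ m * int p ^ m < int p ^ n * int p ^ m" by (simp add: mult.commute)
      then show ?thesis unfolding y_def using pm mult_right_less_imp_less by fastforce
    qed
    show "y (Suc n) mod int p ^ n = y n"
    proof -
      have e1: "x (Suc n + m) mod (int p ^ m * int p ^ n) = int p ^ m * (y (Suc n) mod int p ^ n) + x (Suc n + m) mod int p ^ m"
        unfolding y_def by (rule zmod_zmult2_eq) simp
      have e2: "x (Suc n + m) mod int p ^ m = 0" using dv[of "Suc n"] by simp
      have e3: "x (Suc n + m) mod (int p ^ m * int p ^ n) = x (n + m)"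
        using Zp_compat_le[OF x, of "n+m" "Suc n + m"] by (simp add: power_add mult.commute)
      have e4: "x (n + m) = int p ^ m * y n" using dv[of n] by (simp add: y_def)
      from e1 e2 e3 e4 have "int p ^ m * (y (Suc n) mod int p ^ n) = int p ^ m * y n" by simp
      then show ?thesis using p_gt1 by simp
    qed
  qed
  have "x = pe p m \<otimes>\<^bsub>Zp p\<^esub> y"
  proof
    fix n
    have "(pe p m \<otimes>\<^bsub>Zp p\<^esub> y) n = (int p ^ m * y n) mod int p ^ n" by (rule pe_mult_at)
    also have "int p ^ m * y n = x (n + m)" using dv[of n] by (simp add: y_def)
    also have "x (n + m) mod int p ^ n = x n" by (rule Zp_compat[OF x])
    finally show "x n = (pe p m \<otimes>\<^bsub>Zp p\<^esub> y) n" by simp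
  qed
  then show "\<exists>y\<in>carrier (Zp p). x = pe p m \<otimes>\<^bsub>Zp p\<^esub> y" using yc by blast
qed


lemma res_iff: assumes x: "x \<in> carrier (Zp p)" and y: "y \<in> carrier (Zp p)"
  shows "(\<exists>z\<in>carrier (Zp p). x = y \<oplus>\<^bsub>Zp p\<^esub> pe p m \<otimes>\<^bsub>Zp p\<^esub> z) \<longleftrightarrow> x m = y m"
proof
  assume "\<exists>z\<in>carrier (Zp p). x = y \<oplus>\<^bsub>Zp p\<^esub> pe p m \<otimes>\<^bsub>Zp p\<^esub> z"
  then obtain z where "x = y \<oplus>\<^bsub>Zp p\<^esub> pe p m \<otimes>\<^bsub>Zp p\<^esub> z" by blast
  then have "x m = (y m + (int p ^ m * z m) mod int p ^ m) mod int p ^ m"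
    by (simp add: Zp_add pe_mult_at)
  also have "\<dots> = y m mod int p ^ m" by simp
  also have "\<dots> = y m" using Zp_bounds[OF y, of m] mod_pos_pos_trivial by blast
  finally show "x m = y m" .
next
  assume e: "x m = y m"
  have d: "x \<ominus>\<^bsub>Zp p\<^esub> y \<in> carrier (Zp p)" using x y by simp
  have "(x \<ominus>\<^bsub>Zp p\<^esub> y) m = 0" using minus_at[OF x y, of m] e by simp
  then obtain z where z: "z \<in> carrier (Zp p)" "x \<ominus>\<^bsub>Zp p\<^esub> y = pe p m \<otimes>\<^bsub>Zp p\<^esub> z"
    using dvd_iff[OF d, of m] by blast
  have "x = y \<oplus>\<^bsub>Zp p\<^esub> (x \<ominus>\<^bsub>Zp p\<^esub> y)" using x y by algebra
  then show "\<exists>z\<in>carrier (Zp p). x = y \<oplus>\<^bsub>Zp p\<^esub> pe p m \<otimes>\<^bsub>Zp p\<^esub> z" using z by auto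
qed

lemma res_surj: assumes "0 \<le> r" "r < int p ^ m" shows "\<exists>x\<in>carrier (Zp p). x m = r"
proof
  show "(\<lambda>n. r mod int p ^ n) \<in> carrier (Zp p)"
    unfolding Zp_carrier using p_gt1 by (auto simp: mod_mod_cancel le_imp_power_dvd)
  show "r mod int p ^ m = r" using assms mod_pos_pos_trivial by blast
qed

lemma pe_nonzero: "pe p m \<noteq> \<zero>\<^bsub>Zp p\<^esub>"
proof
  assume "pe p m = \<zero>\<^bsub>Zp p\<^esub>"
  then have "pe p m (Suc m) = 0" by (simp add: Zp_zero)
  moreover have "pe p m (Suc m) = int p ^ m"
    unfolding pe_def using p_gt1 by (intro mod_pos_pos_trivial) auto
  ultimately show False using p_gt1 by simp
qed

lemma one_ne_zero: "\<one>\<^bsub>Zp p\<^esub> \<noteq> \<zero>\<^bsub>Zp p\<^esub>"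
  using pe_nonzero[of 0] pe_pow[of 0] by simp

lemma unit_inv: assumes x: "x \<in> carrier (Zp p)" and x1: "x 1 \<noteq> 0"
  shows "\<exists>y\<in>carrier (Zp p). x \<otimes>\<^bsub>Zp p\<^esub> y = \<one>\<^bsub>Zp p\<^esub>"
proof -
  have ip: "prime (int p)" using p_prime by simp
  have cop: "coprime (x n) (int p ^ n)" for n
  proof (cases n)
    case 0 then show ?thesis by simp
  next
    case (Suc n')
    have "x n mod int p = x 1" using Zp_compat_le[OF x, of 1 n] Suc by simp
    then have "\<not> int p dvd x n" using x1 by (metis dvd_eq_mod_eq_0)
    then have "coprime (int p) (x n)" using prime_imp_coprime[OF ip] by blast
    then show ?thesis by (simp add: coprime_commute)
  qed
  have ex: "\<exists>u. (x n * u) mod int p ^ n = 1 mod int p ^ n" for n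
  proof -
    obtain u v where "u * x n + v * int p ^ n = gcd (x n) (int p ^ n)" using bezout_int by blast
    moreover have "gcd (x n) (int p ^ n) = 1" using cop[of n] by simp
    ultimately have "u * x n + v * int p ^ n = 1" by simp
    then have "x n * u = 1 - v * int p ^ n" by (simp add: mult.commute eq_diff_eq)
    then have "(x n * u) mod int p ^ n = (1 - v * int p ^ n) mod int p ^ n" by simp
    also have "\<dots> = 1 mod int p ^ n" by (simp add: mod_diff_eq[symmetric])
    finally show ?thesis by blast
  qed
  define w where "w = (\<lambda>n. (SOME u. (x n * u) mod int p ^ n = 1 mod int p ^ n) mod int p ^ n)"
  have w1: "(x n * w n) mod int p ^ n = 1 mod int p ^ n" for n
    unfolding w_def using someI_ex[OF ex[of n]] by (simp add: mod_mult_right_eq)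
  have xs: "x (Suc n) mod int p ^ n = x n" for n using Zp_compat[OF x, of n 1] by simp
  have w2: "(x n * w (Suc n)) mod int p ^ n = 1 mod int p ^ n" for n
  proof -
    have "(x n * w (Suc n)) mod int p ^ n = (x (Suc n) * w (Suc n)) mod int p ^ n"
      using xs[of n] by (metis mod_mult_left_eq)
    also have "\<dots> = ((x (Suc n) * w (Suc n)) mod int p ^ Suc n) mod int p ^ n"
      by (simp add: mod_mod_cancel)
    also have "\<dots> = (1 mod int p ^ Suc n) mod int p ^ n" using w1[of "Suc n"] by simp
    also have "\<dots> = 1 mod int p ^ n" by (simp add: mod_mod_cancel)
    finally show ?thesis .
  qed
  have wc: "w \<in> carrier (Zp p)" unfolding Zp_carrier
  proof (intro allI conjI)
    fix n
    show "0 \<le> w n" "w n < int p ^ n" unfolding w_def using p_gt1 by simp_all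
    have "w (Suc n) mod int p ^ n = (w (Suc n) * ((x n * w n) mod int p ^ n)) mod int p ^ n"
    proof (cases "n = 0")
      case True then show ?thesis by simp
    next
      case False
      then have "1 mod int p ^ n = 1" using p_gt1 by (simp add: one_less_power)
      then show ?thesis using w1[of n] by simp
    qed
    also have "\<dots> = (w n * ((x n * w (Suc n)) mod int p ^ n)) mod int p ^ n"
      by (metis mod_mult_right_eq mult.assoc mult.commute)
    also have "\<dots> = (w n * (1 mod int p ^ n)) mod int p ^ n" using w2[of n] by simp
    also have "\<dots> = w n mod int p ^ n" by (simp add: mod_mult_right_eq)
    also have "\<dots> = w n" unfolding w_def by simp
    finally show "w (Suc n) mod int p ^ n = w n" .
  qed
  have "x \<otimes>\<^bsub>Zp p\<^esub> w = \<one>\<^bsub>Zp p\<^esub>" unfolding Zp_mult Zp_one using w1 by (rule ext)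
  then show ?thesis using wc by blast
qed

lemma valuation: assumes x: "x \<in> carrier (Zp p)" and nz: "x \<noteq> \<zero>\<^bsub>Zp p\<^esub>"
  shows "\<exists>v u. u \<in> carrier (Zp p) \<and> u 1 \<noteq> 0 \<and> x = pe p v \<otimes>\<^bsub>Zp p\<^esub> u"
proof -
  obtain n where n: "x n \<noteq> 0" using nz by (auto simp: Zp_zero)
  have "n \<noteq> 0"
  proof
    assume "n = 0" with n Zp_zero_at0[OF x] show False by simp
  qed
  then have ex: "\<exists>j. x (Suc j) \<noteq> 0" using n by (metis not0_implies_Suc)
  define v where "v = (LEAST j. x (Suc j) \<noteq> 0)"
  have xv1: "x (Suc v) \<noteq> 0" unfolding v_def by (rule LeastI_ex[OF ex])
  have xv: "x v = 0"
  proof (cases v)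
    case 0 then show ?thesis using Zp_zero_at0[OF x] by simp
  next
    case (Suc v')
    have "v' < v" using Suc by simp
    then have "\<not> x (Suc v') \<noteq> 0" unfolding v_def by (rule not_less_Least)
    then show ?thesis using Suc by simp
  qed
  obtain u where u: "u \<in> carrier (Zp p)" "x = pe p v \<otimes>\<^bsub>Zp p\<^esub> u" using dvd_iff[OF x, of v] xv by blast
  have "u 1 \<noteq> 0"
  proof
    assume u1: "u 1 = 0"
    have "u (Suc v) mod int p = u 1" using Zp_compat_le[OF u(1), of 1 "Suc v"] by simp
    then have "int p dvd u (Suc v)" using u1 by (simp add: dvd_eq_mod_eq_0)
    then have "int p ^ Suc v dvd int p ^ v * u (Suc v)" by (simp add: power_Suc mult.commute)
    then have "(int p ^ v * u (Suc v)) mod int p ^ Suc v = 0" by simp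
    then have "x (Suc v) = 0" using u(2) by (simp add: pe_mult_at)
    then show False using xv1 by simp
  qed
  then show ?thesis using u by blast
qed

lemma pe_mult: "pe p a \<otimes>\<^bsub>Zp p\<^esub> pe p b = pe p (a + b)"
  using R.nat_pow_mult[of "pe p 1" a b] pe_pow pe_carrier by simp

lemma Zp_integral: assumes x: "x \<in> carrier (Zp p)" and y: "y \<in> carrier (Zp p)"
  and xy: "x \<otimes>\<^bsub>Zp p\<^esub> y = \<zero>\<^bsub>Zp p\<^esub>"
  shows "x = \<zero>\<^bsub>Zp p\<^esub> \<or> y = \<zero>\<^bsub>Zp p\<^esub>"
proof (rule ccontr)
  assume "\<not> ?thesis"
  then have nx: "x \<noteq> \<zero>\<^bsub>Zp p\<^esub>" and ny: "y \<noteq> \<zero>\<^bsub>Zp p\<^esub>" by auto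
  obtain a u where u: "u \<in> carrier (Zp p)" "u 1 \<noteq> 0" "x = pe p a \<otimes>\<^bsub>Zp p\<^esub> u" using valuation[OF x nx] by blast
  obtain b w where w: "w \<in> carrier (Zp p)" "w 1 \<noteq> 0" "y = pe p b \<otimes>\<^bsub>Zp p\<^esub> w" using valuation[OF y ny] by blast
  obtain u' where u': "u' \<in> carrier (Zp p)" "u \<otimes>\<^bsub>Zp p\<^esub> u' = \<one>\<^bsub>Zp p\<^esub>" using unit_inv[OF u(1,2)] by blast
  obtain w' where w': "w' \<in> carrier (Zp p)" "w \<otimes>\<^bsub>Zp p\<^esub> w' = \<one>\<^bsub>Zp p\<^esub>" using unit_inv[OF w(1,2)] by blast
  have pa: "pe p a \<in> carrier (Zp p)" and pb: "pe p b \<in> carrier (Zp p)" by (rule pe_carrier)+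
  have "pe p a \<otimes>\<^bsub>Zp p\<^esub> pe p b = (x \<otimes>\<^bsub>Zp p\<^esub> y) \<otimes>\<^bsub>Zp p\<^esub> (u' \<otimes>\<^bsub>Zp p\<^esub> w')"
  proof -
    have "(x \<otimes>\<^bsub>Zp p\<^esub> y) \<otimes>\<^bsub>Zp p\<^esub> (u' \<otimes>\<^bsub>Zp p\<^esub> w') =
       (pe p a \<otimes>\<^bsub>Zp p\<^esub> pe p b) \<otimes>\<^bsub>Zp p\<^esub> ((u \<otimes>\<^bsub>Zp p\<^esub> u') \<otimes>\<^bsub>Zp p\<^esub> (w \<otimes>\<^bsub>Zp p\<^esub> w'))"
      unfolding u(3) w(3) using pa pb u(1) w(1) u'(1) w'(1) by algebra
    then show ?thesis using u'(2) w'(2) pa pb by simp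
  qed
  also have "\<dots> = \<zero>\<^bsub>Zp p\<^esub>" using xy u' w' by simp
  finally show False using pe_mult pe_nonzero by simp
qed

lemma Zp_domain: "domain (Zp p)"
  unfolding domain_def domain_axioms_def using Zp_cring one_ne_zero Zp_integral by blast

end

locale zpmod = module R L for R (structure) and L (structure) +
  fixes p :: nat and n :: nat and e :: "nat \<Rightarrow> 'a"
  assumes R_def: "R = Zp p" and p_prime: "prime p"
    and basis: "is_basis R L (carrier L) n e"
begin

lemma R_domain: "domain R" using Zp_domain[OF p_prime] R.cring_axioms R_def by simp

sublocale D: domain R by (rule R_domain)

lemma e_closed [simp]: "i < n \<Longrightarrow> e i \<in> carrier L"
  using basis unfolding is_basis_def by blast

lemma lc_closed [simp]: assumes c: "c \<in> {..<n} \<rightarrow> carrier R"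
  shows "(\<Oplus>\<^bsub>L\<^esub>i\<in>{..<n}. c i \<odot>\<^bsub>L\<^esub> e i) \<in> carrier L"
proof (rule M.finsum_closed, rule Pi_I)
  fix i assume "i \<in> {..<n}"
  then have "c i \<in> carrier R" "e i \<in> carrier L" using c by auto
  then show "c i \<odot>\<^bsub>L\<^esub> e i \<in> carrier L" by simp
qed

lemma Rc: "cring (Zp p)" using R.cring_axioms R_def by simp

lemma dvd_iffR: "x \<in> carrier R \<Longrightarrow> (\<exists>y\<in>carrier R. x = pe p m \<otimes> y) \<longleftrightarrow> x m = 0"
  using dvd_iff[OF p_prime Rc] by (simp only: R_def)
lemma pe_carrierR [simp]: "pe p m \<in> carrier R"
  using pe_carrier[OF p_prime Rc] by (simp only: R_def)
lemma compat_leR: "x \<in> carrier R \<Longrightarrow> a \<le> b \<Longrightarrow> x b mod int p ^ a = x a"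
  using Zp_compat_le[OF p_prime Rc] by (simp only: R_def)
lemma zeroR: "\<zero> = (\<lambda>n. 0)"
  using Zp_zero by (simp only: R_def)

definition coords :: "'a \<Rightarrow> nat \<Rightarrow> (nat \<Rightarrow> int)" where
  "coords x = (THE c. c \<in> {..<n} \<rightarrow>\<^sub>E carrier R \<and> x = (\<Oplus>\<^bsub>L\<^esub>i\<in>{..<n}. c i \<odot>\<^bsub>L\<^esub> e i))"

lemma coords_spec: assumes "x \<in> carrier L"
  shows "coords x \<in> {..<n} \<rightarrow>\<^sub>E carrier R" "x = (\<Oplus>\<^bsub>L\<^esub>i\<in>{..<n}. coords x i \<odot>\<^bsub>L\<^esub> e i)"
proof -
  have "\<exists>!c. c \<in> {..<n} \<rightarrow>\<^sub>E carrier R \<and> x = (\<Oplus>\<^bsub>L\<^esub>i\<in>{..<n}. c i \<odot>\<^bsub>L\<^esub> e i)"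
    using basis assms unfolding is_basis_def by blast
  then have "coords x \<in> {..<n} \<rightarrow>\<^sub>E carrier R \<and> x = (\<Oplus>\<^bsub>L\<^esub>i\<in>{..<n}. coords x i \<odot>\<^bsub>L\<^esub> e i)"
    unfolding coords_def by (rule theI')
  then show "coords x \<in> {..<n} \<rightarrow>\<^sub>E carrier R" "x = (\<Oplus>\<^bsub>L\<^esub>i\<in>{..<n}. coords x i \<odot>\<^bsub>L\<^esub> e i)" by auto
qed

lemma coords_closed [simp]: "x \<in> carrier L \<Longrightarrow> i < n \<Longrightarrow> coords x i \<in> carrier R"
  using coords_spec(1)[of x] by auto

lemma coords_lc_E: assumes c: "c \<in> {..<n} \<rightarrow>\<^sub>E carrier R"
  shows "coords (\<Oplus>\<^bsub>L\<^esub>i\<in>{..<n}. c i \<odot>\<^bsub>L\<^esub> e i) = c"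
proof -
  let ?x = "\<Oplus>\<^bsub>L\<^esub>i\<in>{..<n}. c i \<odot>\<^bsub>L\<^esub> e i"
  have "c \<in> {..<n} \<rightarrow> carrier R" using c by (simp add: PiE_iff Pi_iff)
  then have x: "?x \<in> carrier L" by (rule lc_closed)
  have "\<exists>!c. c \<in> {..<n} \<rightarrow>\<^sub>E carrier R \<and> ?x = (\<Oplus>\<^bsub>L\<^esub>i\<in>{..<n}. c i \<odot>\<^bsub>L\<^esub> e i)"
    using basis x unfolding is_basis_def by blast
  then show ?thesis using coords_spec[OF x] c by blast
qed

lemma coords_lc: assumes c: "c \<in> {..<n} \<rightarrow> carrier R" and i: "i < n"
  shows "coords (\<Oplus>\<^bsub>L\<^esub>i\<in>{..<n}. c i \<odot>\<^bsub>L\<^esub> e i) i = c i"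
proof -
  have "(\<Oplus>\<^bsub>L\<^esub>i\<in>{..<n}. c i \<odot>\<^bsub>L\<^esub> e i) = (\<Oplus>\<^bsub>L\<^esub>i\<in>{..<n}. restrict c {..<n} i \<odot>\<^bsub>L\<^esub> e i)"
    using c by (intro M.finsum_cong') (auto simp: Pi_iff)
  moreover have "restrict c {..<n} \<in> {..<n} \<rightarrow>\<^sub>E carrier R" using c by auto
  ultimately have "coords (\<Oplus>\<^bsub>L\<^esub>i\<in>{..<n}. c i \<odot>\<^bsub>L\<^esub> e i) = restrict c {..<n}"
    using coords_lc_E by metis
  then show ?thesis using i by simp
qed

lemma eq_coords: assumes x: "x \<in> carrier L" and y: "y \<in> carrier L"
  and h: "\<And>i. i < n \<Longrightarrow> coords x i = coords y i"
  shows "x = y"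
proof -
  have "x = (\<Oplus>\<^bsub>L\<^esub>i\<in>{..<n}. coords x i \<odot>\<^bsub>L\<^esub> e i)" by (rule coords_spec(2)[OF x])
  also have "\<dots> = (\<Oplus>\<^bsub>L\<^esub>i\<in>{..<n}. coords y i \<odot>\<^bsub>L\<^esub> e i)"
    using h y by (intro M.finsum_cong') auto
  also have "\<dots> = y" by (rule coords_spec(2)[OF y, symmetric])
  finally show ?thesis .
qed

lemma coords_add: assumes x: "x \<in> carrier L" and y: "y \<in> carrier L" and i: "i < n"
  shows "coords (x \<oplus>\<^bsub>L\<^esub> y) i = coords x i \<oplus> coords y i"
proof -
  have "x \<oplus>\<^bsub>L\<^esub> y = (\<Oplus>\<^bsub>L\<^esub>i\<in>{..<n}. coords x i \<odot>\<^bsub>L\<^esub> e i) \<oplus>\<^bsub>L\<^esub> (\<Oplus>\<^bsub>L\<^esub>i\<in>{..<n}. coords y i \<odot>\<^bsub>L\<^esub> e i)"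
    using coords_spec(2)[OF x] coords_spec(2)[OF y] by simp
  also have "\<dots> = (\<Oplus>\<^bsub>L\<^esub>i\<in>{..<n}. coords x i \<odot>\<^bsub>L\<^esub> e i \<oplus>\<^bsub>L\<^esub> coords y i \<odot>\<^bsub>L\<^esub> e i)"
    using x y by (intro M.finsum_addf[symmetric]) auto
  also have "\<dots> = (\<Oplus>\<^bsub>L\<^esub>i\<in>{..<n}. (coords x i \<oplus> coords y i) \<odot>\<^bsub>L\<^esub> e i)"
    using x y by (intro M.finsum_cong') (auto simp: smult_l_distr)
  finally have "coords (x \<oplus>\<^bsub>L\<^esub> y) i = coords (\<Oplus>\<^bsub>L\<^esub>i\<in>{..<n}. (coords x i \<oplus> coords y i) \<odot>\<^bsub>L\<^esub> e i) i"
    by simp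
  also have "\<dots> = coords x i \<oplus> coords y i" using x y i by (intro coords_lc) auto
  finally show ?thesis .
qed

lemma coords_smult: assumes a: "a \<in> carrier R" and x: "x \<in> carrier L" and i: "i < n"
  shows "coords (a \<odot>\<^bsub>L\<^esub> x) i = a \<otimes> coords x i"
proof -
  have "a \<odot>\<^bsub>L\<^esub> x = a \<odot>\<^bsub>L\<^esub> (\<Oplus>\<^bsub>L\<^esub>i\<in>{..<n}. coords x i \<odot>\<^bsub>L\<^esub> e i)"
    using coords_spec(2)[OF x] by simp
  also have "\<dots> = (\<Oplus>\<^bsub>L\<^esub>i\<in>{..<n}. a \<odot>\<^bsub>L\<^esub> (coords x i \<odot>\<^bsub>L\<^esub> e i))"
    using x a by (intro finsum_smult_ldistr) auto
  also have "\<dots> = (\<Oplus>\<^bsub>L\<^esub>i\<in>{..<n}. (a \<otimes> coords x i) \<odot>\<^bsub>L\<^esub> e i)"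
    using x a by (intro M.finsum_cong') (auto simp: smult_assoc1)
  finally have "coords (a \<odot>\<^bsub>L\<^esub> x) i = coords (\<Oplus>\<^bsub>L\<^esub>i\<in>{..<n}. (a \<otimes> coords x i) \<odot>\<^bsub>L\<^esub> e i) i"
    by simp
  also have "\<dots> = a \<otimes> coords x i" using x a i by (intro coords_lc) auto
  finally show ?thesis .
qed

lemma coords_zero: "i < n \<Longrightarrow> coords \<zero>\<^bsub>L\<^esub> i = \<zero>"
  using coords_smult[of \<zero> "\<zero>\<^bsub>L\<^esub>" i] by simp

lemma coords_neg: assumes x: "x \<in> carrier L" and i: "i < n"
  shows "coords (\<ominus>\<^bsub>L\<^esub> x) i = \<ominus> coords x i"
  using coords_smult[of "\<ominus> \<one>" x i] x i smult_l_minus[of \<one> x] by (simp add: R.l_minus)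

lemma coords_minus: assumes x: "x \<in> carrier L" and y: "y \<in> carrier L" and i: "i < n"
  shows "coords (x \<ominus>\<^bsub>L\<^esub> y) i = coords x i \<ominus> coords y i"
  using coords_add[of x "\<ominus>\<^bsub>L\<^esub> y" i] coords_neg[OF y i] x y i by (simp add: M.minus_eq R.minus_eq)

lemma zero_coords: assumes x: "x \<in> carrier L" and h: "\<And>i. i < n \<Longrightarrow> coords x i = \<zero>"
  shows "x = \<zero>\<^bsub>L\<^esub>"
  using eq_coords[OF x M.zero_closed] h coords_zero by simp

lemma torsion_free: assumes a: "a \<in> carrier R" "a \<noteq> \<zero>" and x: "x \<in> carrier L"
  and ax: "a \<odot>\<^bsub>L\<^esub> x = \<zero>\<^bsub>L\<^esub>" shows "x = \<zero>\<^bsub>L\<^esub>"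
proof (rule zero_coords[OF x])
  fix i assume i: "i < n"
  have "a \<otimes> coords x i = \<zero>" using coords_smult[OF a(1) x i] ax coords_zero[OF i] by simp
  then show "coords x i = \<zero>" using D.integral[of a "coords x i"] a x i by auto
qed

lemma smult_cancel: assumes a: "a \<in> carrier R" "a \<noteq> \<zero>" and x: "x \<in> carrier L" and y: "y \<in> carrier L"
  and h: "a \<odot>\<^bsub>L\<^esub> x = a \<odot>\<^bsub>L\<^esub> y" shows "x = y"
proof -
  have "a \<odot>\<^bsub>L\<^esub> (x \<ominus>\<^bsub>L\<^esub> y) = \<zero>\<^bsub>L\<^esub>"
    using h a x y by (simp add: M.minus_eq smult_r_distr smult_r_minus M.r_neg)
  then have "x \<ominus>\<^bsub>L\<^esub> y = \<zero>\<^bsub>L\<^esub>" using torsion_free[OF a] x y by simp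
  then show ?thesis using x y by (metis M.minus_equality M.minus_minus M.r_zero M.minus_eq M.add.inv_closed M.zero_closed M.l_neg M.add.m_assoc M.add.m_comm)
qed

lemma coords_e: assumes j: "j < n" and i: "i < n"
  shows "coords (e j) i = (if i = j then \<one> else \<zero>)"
proof -
  have "e j = (\<Oplus>\<^bsub>L\<^esub>i\<in>{..<n}. (if i = j then \<one> else \<zero>) \<odot>\<^bsub>L\<^esub> e i)"
  proof -
    have "(\<Oplus>\<^bsub>L\<^esub>i\<in>{..<n}. (if i = j then \<one> else \<zero>) \<odot>\<^bsub>L\<^esub> e i) = (\<Oplus>\<^bsub>L\<^esub>i\<in>{..<n}. if j = i then e i else \<zero>\<^bsub>L\<^esub>)"
      by (intro M.finsum_cong') auto
    also have "\<dots> = e j" using j by (intro M.finsum_singleton) auto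
    finally show ?thesis by simp
  qed
  then have "coords (e j) i = coords (\<Oplus>\<^bsub>L\<^esub>i\<in>{..<n}. (if i = j then \<one> else \<zero>) \<odot>\<^bsub>L\<^esub> e i) i" by simp
  also have "\<dots> = (if i = j then \<one> else \<zero>)" using i by (intro coords_lc) auto
  finally show ?thesis .
qed

lemma L_div: assumes x: "x \<in> carrier L" and h: "\<And>i. i < n \<Longrightarrow> coords x i m = 0"
  shows "\<exists>y\<in>carrier L. x = pe p m \<odot>\<^bsub>L\<^esub> y"
proof -
  have "\<forall>i\<in>{..<n}. \<exists>z\<in>carrier R. coords x i = pe p m \<otimes> z"
    using dvd_iffR h x by auto
  then obtain z where z: "\<And>i. i < n \<Longrightarrow> z i \<in> carrier R \<and> coords x i = pe p m \<otimes> z i"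
    by (metis lessThan_iff)
  let ?y = "\<Oplus>\<^bsub>L\<^esub>i\<in>{..<n}. z i \<odot>\<^bsub>L\<^esub> e i"
  have pm: "pe p m \<in> carrier R" by simp
  have y: "?y \<in> carrier L" using z by (intro lc_closed) auto
  have "x = pe p m \<odot>\<^bsub>L\<^esub> ?y"
  proof (rule eq_coords[OF x])
    show "pe p m \<odot>\<^bsub>L\<^esub> ?y \<in> carrier L" using y pm by simp
    fix i assume i: "i < n"
    have "coords (pe p m \<odot>\<^bsub>L\<^esub> ?y) i = pe p m \<otimes> coords ?y i" by (rule coords_smult[OF pm y i])
    also have "coords ?y i = z i" using z i by (intro coords_lc) auto
    finally show "coords x i = coords (pe p m \<odot>\<^bsub>L\<^esub> ?y) i" using z[OF i] by simp
  qed
  then show ?thesis using y by blast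
qed

lemma L_div_coords: assumes y: "y \<in> carrier L" and i: "i < n"
  shows "coords (pe p m \<odot>\<^bsub>L\<^esub> y) i m = 0"
proof -
  have pm: "pe p m \<in> carrier R" by simp
  have "coords (pe p m \<odot>\<^bsub>L\<^esub> y) i = pe p m \<otimes> coords y i" by (rule coords_smult[OF pm y i])
  then show ?thesis using dvd_iffR[of "coords (pe p m \<odot>\<^bsub>L\<^esub> y) i" m]
      coords_closed[OF y i] pm y i by auto
qed

lemma L_div_all_zero: assumes x: "x \<in> carrier L" and h: "\<And>m. \<exists>y\<in>carrier L. x = pe p (f m) \<odot>\<^bsub>L\<^esub> y"
  and f: "\<And>m. m \<le> f m"
  shows "x = \<zero>\<^bsub>L\<^esub>"
proof (rule zero_coords[OF x])
  fix i assume i: "i < n"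
  show "coords x i = \<zero>"
  proof -
    have "coords x i m = 0" for m
    proof -
      obtain y where y: "y \<in> carrier L" "x = pe p (f m) \<odot>\<^bsub>L\<^esub> y" using h by blast
      have "coords x i (f m) = 0" using L_div_coords[OF y(1) i] y(2) by simp
      then have "coords x i (f m) mod int p ^ m = 0" by simp
      moreover have "coords x i (f m) mod int p ^ m = coords x i m"
        using compat_leR[of "coords x i" m "f m"] f[of m] coords_closed[OF x i] by simp
      ultimately show ?thesis by simp
    qed
    then show ?thesis by (auto simp: zeroR)
  qed
qed

end

lemma card_image_cong:
  assumes "\<And>x y. x \<in> S \<Longrightarrow> y \<in> S \<Longrightarrow> f x = f y \<longleftrightarrow> g x = g y"
  shows "card (f ` S) = card (g ` S)"
proof -
  define h where "h = (\<lambda>z. g (SOME x. x \<in> S \<and> f x = z))"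
  have hf: "h (f x) = g x" if "x \<in> S" for x
  proof -
    have "\<exists>x'. x' \<in> S \<and> f x' = f x" using that by blast
    then have "(SOME x'. x' \<in> S \<and> f x' = f x) \<in> S \<and> f (SOME x'. x' \<in> S \<and> f x' = f x) = f x"
      by (rule someI_ex)
    then show ?thesis unfolding h_def using assms that by blast
  qed
  have "inj_on h (f ` S)"
    by (rule inj_onI) (auto simp: hf assms)
  moreover have "h ` (f ` S) = g ` S" by (auto simp: hf image_iff)
  ultimately show ?thesis by (metis card_image)
qed

context zpmod begin

lemma addR_at: "(a \<oplus> b) k = (a k + b k) mod int p ^ k"
  using Zp_add by (simp only: R_def)
lemma minusR_at: "a \<in> carrier R \<Longrightarrow> b \<in> carrier R \<Longrightarrow> (a \<ominus> b) k = (a k - b k) mod int p ^ k"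
  using minus_at[OF p_prime Rc] by (simp only: R_def)
lemma boundsR: "a \<in> carrier R \<Longrightarrow> 0 \<le> a k \<and> a k < int p ^ k"
  using Zp_bounds[OF p_prime Rc] by (simp only: R_def)
lemma res_surjR: "0 \<le> r \<Longrightarrow> r < int p ^ k \<Longrightarrow> \<exists>x\<in>carrier R. x k = r"
  using res_surj[OF p_prime Rc] by (simp only: R_def)

definition Mset :: "(nat \<Rightarrow> nat) \<Rightarrow> 'a set" where
  "Mset m = {x \<in> carrier L. \<forall>i<n. coords x i (m i) = 0}"

lemma in_coset: assumes y: "y \<in> carrier L"
  shows "z \<in> Mset m +>\<^bsub>L\<^esub> y \<longleftrightarrow> z \<in> carrier L \<and> (\<forall>i<n. coords z i (m i) = coords y i (m i))"
proof
  assume "z \<in> Mset m +>\<^bsub>L\<^esub> y"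
  then obtain h where h: "h \<in> Mset m" "z = h \<oplus>\<^bsub>L\<^esub> y" unfolding a_r_coset_def' by blast
  have hc: "h \<in> carrier L" using h(1) unfolding Mset_def by blast
  have "coords z i (m i) = coords y i (m i)" if i: "i < n" for i
  proof -
    have "coords z i (m i) = (coords h i (m i) + coords y i (m i)) mod int p ^ (m i)"
      using coords_add[OF hc y i] h(2) by (simp add: addR_at)
    also have "\<dots> = coords y i (m i) mod int p ^ (m i)" using h(1) i unfolding Mset_def by simp
    also have "\<dots> = coords y i (m i)" using boundsR[OF coords_closed[OF y i], of "m i"] by (simp add: mod_pos_pos_trivial)
    finally show ?thesis .
  qed
  then show "z \<in> carrier L \<and> (\<forall>i<n. coords z i (m i) = coords y i (m i))" using hc y h(2) by simp
next
  assume a: "z \<in> carrier L \<and> (\<forall>i<n. coords z i (m i) = coords y i (m i))"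
  then have z: "z \<in> carrier L" by simp
  have "z \<ominus>\<^bsub>L\<^esub> y \<in> Mset m"
    unfolding Mset_def using a y z by (auto simp: coords_minus minusR_at)
  moreover have "z = (z \<ominus>\<^bsub>L\<^esub> y) \<oplus>\<^bsub>L\<^esub> y"
    using z y by (simp add: M.minus_eq M.add.m_assoc M.l_neg)
  ultimately show "z \<in> Mset m +>\<^bsub>L\<^esub> y" unfolding a_r_coset_def' by blast
qed

lemma coset_eq: assumes x: "x \<in> carrier L" and y: "y \<in> carrier L"
  shows "Mset m +>\<^bsub>L\<^esub> x = Mset m +>\<^bsub>L\<^esub> y \<longleftrightarrow> (\<forall>i<n. coords x i (m i) = coords y i (m i))"
proof
  assume e: "Mset m +>\<^bsub>L\<^esub> x = Mset m +>\<^bsub>L\<^esub> y"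
  have "x \<in> Mset m +>\<^bsub>L\<^esub> x" using in_coset[OF x] x by simp
  then show "\<forall>i<n. coords x i (m i) = coords y i (m i)" using e in_coset[OF y] by simp
next
  assume "\<forall>i<n. coords x i (m i) = coords y i (m i)"
  then show "Mset m +>\<^bsub>L\<^esub> x = Mset m +>\<^bsub>L\<^esub> y" using in_coset[OF x] in_coset[OF y] by auto
qed

lemma index_Mset: "card (a_rcosets\<^bsub>L\<^esub> (Mset m)) = (\<Prod>i<n. p ^ m i)"
proof -
  let ?F = "\<lambda>x. \<lambda>i\<in>{..<n}. coords x i (m i)"
  have "a_rcosets\<^bsub>L\<^esub> (Mset m) = (\<lambda>x. Mset m +>\<^bsub>L\<^esub> x) ` carrier L"
    unfolding A_RCOSETS_def' by auto
  moreover have "card ((\<lambda>x. Mset m +>\<^bsub>L\<^esub> x) ` carrier L) = card (?F ` carrier L)"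
  proof (rule card_image_cong)
    fix x y assume x: "x \<in> carrier L" and y: "y \<in> carrier L"
    have "?F x = ?F y \<longleftrightarrow> (\<forall>i<n. coords x i (m i) = coords y i (m i))"
      by (auto simp: fun_eq_iff restrict_def)
    then show "Mset m +>\<^bsub>L\<^esub> x = Mset m +>\<^bsub>L\<^esub> y \<longleftrightarrow> ?F x = ?F y"
      using coset_eq[OF x y] by simp
  qed
  ultimately have "card (a_rcosets\<^bsub>L\<^esub> (Mset m)) = card (?F ` carrier L)" by simp
  also have "?F ` carrier L = PiE {..<n} (\<lambda>i. {0..<int p ^ m i})"
  proof
    show "?F ` carrier L \<subseteq> PiE {..<n} (\<lambda>i. {0..<int p ^ m i})"
    proof
      fix r assume "r \<in> ?F ` carrier L"
      then obtain x where x: "x \<in> carrier L" "r = ?F x" by blast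
      show "r \<in> PiE {..<n} (\<lambda>i. {0..<int p ^ m i})"
        unfolding x(2) using boundsR coords_closed[OF x(1)] by (auto simp: PiE_iff)
    qed
    show "PiE {..<n} (\<lambda>i. {0..<int p ^ m i}) \<subseteq> ?F ` carrier L"
    proof
      fix r assume r: "r \<in> PiE {..<n} (\<lambda>i. {0..<int p ^ m i})"
      have "\<forall>i\<in>{..<n}. \<exists>c\<in>carrier R. c (m i) = r i"
        using r res_surjR by (auto simp: PiE_iff)
      then obtain c where c: "\<And>i. i < n \<Longrightarrow> c i \<in> carrier R \<and> c i (m i) = r i" by (metis lessThan_iff)
      let ?x = "\<Oplus>\<^bsub>L\<^esub>i\<in>{..<n}. c i \<odot>\<^bsub>L\<^esub> e i"
      have cp: "c \<in> {..<n} \<rightarrow> carrier R" using c by auto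
      have "?F ?x = r"
      proof
        fix i show "?F ?x i = r i"
          using coords_lc[OF cp] c r by (cases "i < n") (auto simp: PiE_iff extensional_def)
      qed
      moreover have "?x \<in> carrier L" using cp by (rule lc_closed)
      ultimately show "r \<in> ?F ` carrier L" by blast
    qed
  qed
  also have "card (PiE {..<n} (\<lambda>i. {0..<int p ^ m i})) = (\<Prod>i<n. card {0..<int p ^ m i})"
    by (simp add: card_PiE)
  also have "\<dots> = (\<Prod>i<n. p ^ m i)"
    by (intro prod.cong) (auto simp: nat_power_eq)
  finally show ?thesis .
qed

end

lemma (in abelian_group) finsum_neg:
  assumes "finite A" "f \<in> A \<rightarrow> carrier G"
  shows "(\<Oplus>i\<in>A. \<ominus> f i) = \<ominus> (\<Oplus>i\<in>A. f i)"
proof -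
  have "(\<Oplus>i\<in>A. \<ominus> f i) \<oplus> (\<Oplus>i\<in>A. f i) = (\<Oplus>i\<in>A. \<ominus> f i \<oplus> f i)"
    using assms by (intro finsum_addf[symmetric]) auto
  also have "\<dots> = (\<Oplus>i\<in>A. \<zero>)" using assms by (intro finsum_cong') (auto intro: l_neg)
  finally have "(\<Oplus>i\<in>A. \<ominus> f i) \<oplus> (\<Oplus>i\<in>A. f i) = \<zero>" by simp
  moreover have "(\<Oplus>i\<in>A. \<ominus> f i) \<in> carrier G" using assms by (intro finsum_closed) auto
  ultimately show ?thesis using assms by (intro minus_equality[symmetric]) auto
qed

lemma (in domain) dep:
  assumes "finite K"
  shows "\<And>J v. finite J \<Longrightarrow> card K < card J \<Longrightarrow> (\<And>j k. j \<in> J \<Longrightarrow> k \<in> K \<Longrightarrow> v j k \<in> carrier R) \<Longrightarrow>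
    \<exists>lam. (\<forall>j\<in>J. lam j \<in> carrier R) \<and> (\<exists>j\<in>J. lam j \<noteq> \<zero>) \<and> (\<forall>k\<in>K. (\<Oplus>j\<in>J. lam j \<otimes> v j k) = \<zero>)"
  using assms
proof (induction K rule: finite_induct)
  case empty
  then obtain j where "j \<in> J" by (metis card.empty card_gt_0_iff ex_in_conv)
  then show ?case by (intro exI[of _ "\<lambda>_. \<one>"]) auto
next
  case (insert k K J v)
  show ?case
  proof (cases "\<forall>j\<in>J. v j k = \<zero>")
    case True
    have "card K < card J" using insert by simp
    then obtain lam where l: "\<forall>j\<in>J. lam j \<in> carrier R" "\<exists>j\<in>J. lam j \<noteq> \<zero>" "\<forall>k\<in>K. (\<Oplus>j\<in>J. lam j \<otimes> v j k) = \<zero>"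
      using insert.IH[of J v] insert.prems by blast
    have "(\<Oplus>j\<in>J. lam j \<otimes> v j k) = (\<Oplus>j\<in>J. \<zero>)"
      using True l(1) by (intro finsum_cong') auto
    then have "(\<Oplus>j\<in>J. lam j \<otimes> v j k) = \<zero>" by simp
    then show ?thesis using l by auto
  next
    case False
    then obtain j0 where j0: "j0 \<in> J" "v j0 k \<noteq> \<zero>" by blast
    define c where "c = v j0 k"
    have c: "c \<in> carrier R" "c \<noteq> \<zero>" using j0 insert.prems unfolding c_def by auto
    define J' where "J' = J - {j0}"
    have J: "J = insert j0 J'" "j0 \<notin> J'" "finite J'" using j0 insert.prems unfolding J'_def by auto
    have cJ': "card K < card J'" using insert.prems insert.hyps J by simp
    define w where "w = (\<lambda>j k'. c \<otimes> v j k' \<ominus> v j k \<otimes> v j0 k')"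
    have vc: "\<And>j k'. j \<in> J \<Longrightarrow> k' \<in> insert k K \<Longrightarrow> v j k' \<in> carrier R" by (rule insert.prems(3))
    have wc: "\<And>j k'. j \<in> J' \<Longrightarrow> k' \<in> K \<Longrightarrow> w j k' \<in> carrier R"
      unfolding w_def using vc c J by auto
    have "\<exists>lam. (\<forall>j\<in>J'. lam j \<in> carrier R) \<and> (\<exists>j\<in>J'. lam j \<noteq> \<zero>) \<and> (\<forall>k\<in>K. (\<Oplus>j\<in>J'. lam j \<otimes> w j k) = \<zero>)"
      apply (rule insert.IH[of J' w])
      using J(3) cJ' wc by auto
    then obtain lam where l: "\<forall>j\<in>J'. lam j \<in> carrier R" "\<exists>j\<in>J'. lam j \<noteq> \<zero>" "\<forall>k\<in>K. (\<Oplus>j\<in>J'. lam j \<otimes> w j k) = \<zero>"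
      by blast
    define s where "s = (\<Oplus>j\<in>J'. lam j \<otimes> v j k)"
    have sc: "s \<in> carrier R" unfolding s_def using l(1) vc J by (intro finsum_closed) auto
    define \<mu> where "\<mu> = (\<lambda>j. if j = j0 then \<ominus> s else c \<otimes> lam j)"
    have key: "(\<Oplus>j\<in>J. \<mu> j \<otimes> v j k') = (\<Oplus>j\<in>J'. lam j \<otimes> w j k')" if k': "k' \<in> insert k K" for k'
    proof -
      have vj0: "v j0 k' \<in> carrier R" using vc J k' by auto
      have vJ: "\<And>j. j \<in> J' \<Longrightarrow> v j k' \<in> carrier R" "\<And>j. j \<in> J' \<Longrightarrow> v j k \<in> carrier R"
        using vc J k' by auto
      have "(\<Oplus>j\<in>J. \<mu> j \<otimes> v j k') = \<mu> j0 \<otimes> v j0 k' \<oplus> (\<Oplus>j\<in>J'. \<mu> j \<otimes> v j k')"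
        unfolding J(1) using J vJ vj0 l(1) sc c by (intro finsum_insert) (auto simp: \<mu>_def)
      also have "(\<Oplus>j\<in>J'. \<mu> j \<otimes> v j k') = (\<Oplus>j\<in>J'. c \<otimes> (lam j \<otimes> v j k'))"
        using J vJ l(1) c by (intro finsum_cong') (auto simp: \<mu>_def m_assoc)
      also have "\<dots> = c \<otimes> (\<Oplus>j\<in>J'. lam j \<otimes> v j k')"
        using J vJ l(1) c by (intro finsum_rdistr[symmetric]) auto
      also have "\<mu> j0 \<otimes> v j0 k' = \<ominus> (s \<otimes> v j0 k')" using sc vj0 by (simp add: \<mu>_def l_minus)
      also have "s \<otimes> v j0 k' = (\<Oplus>j\<in>J'. (lam j \<otimes> v j k) \<otimes> v j0 k')"
        unfolding s_def using J vJ l(1) vj0 by (intro finsum_ldistr) auto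
      finally have "(\<Oplus>j\<in>J. \<mu> j \<otimes> v j k') = \<ominus> (\<Oplus>j\<in>J'. (lam j \<otimes> v j k) \<otimes> v j0 k') \<oplus> c \<otimes> (\<Oplus>j\<in>J'. lam j \<otimes> v j k')" .
      also have "c \<otimes> (\<Oplus>j\<in>J'. lam j \<otimes> v j k') = (\<Oplus>j\<in>J'. c \<otimes> (lam j \<otimes> v j k'))"
        using J vJ l(1) c by (intro finsum_rdistr) auto
      also have "\<ominus> (\<Oplus>j\<in>J'. (lam j \<otimes> v j k) \<otimes> v j0 k') = (\<Oplus>j\<in>J'. \<ominus> ((lam j \<otimes> v j k) \<otimes> v j0 k'))"
        using J vJ l(1) vj0 by (intro finsum_neg[symmetric]) auto
      also have "(\<Oplus>j\<in>J'. \<ominus> ((lam j \<otimes> v j k) \<otimes> v j0 k')) \<oplus> (\<Oplus>j\<in>J'. c \<otimes> (lam j \<otimes> v j k')) =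
          (\<Oplus>j\<in>J'. \<ominus> ((lam j \<otimes> v j k) \<otimes> v j0 k') \<oplus> c \<otimes> (lam j \<otimes> v j k'))"
        using J vJ l(1) vj0 c by (intro finsum_addf[symmetric]) auto
      also have "\<dots> = (\<Oplus>j\<in>J'. lam j \<otimes> w j k')"
      proof (rule finsum_cong')
        show "(\<lambda>j. lam j \<otimes> w j k') \<in> J' \<rightarrow> carrier R"
          using vJ l(1) vj0 c unfolding w_def by auto
        fix j assume j: "j \<in> J'"
        have cs: "lam j \<in> carrier R" "v j k \<in> carrier R" "v j k' \<in> carrier R" using j vJ l(1) by auto
        show "\<ominus> ((lam j \<otimes> v j k) \<otimes> v j0 k') \<oplus> c \<otimes> (lam j \<otimes> v j k') = lam j \<otimes> w j k'"
          unfolding w_def using cs vj0 c by algebra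
      qed simp
      finally show ?thesis .
    qed
    have "\<forall>k'\<in>insert k K. (\<Oplus>j\<in>J. \<mu> j \<otimes> v j k') = \<zero>"
    proof
      fix k' assume k': "k' \<in> insert k K"
      show "(\<Oplus>j\<in>J. \<mu> j \<otimes> v j k') = \<zero>"
      proof (cases "k' = k")
        case True
        have "(\<Oplus>j\<in>J'. lam j \<otimes> w j k') = (\<Oplus>j\<in>J'. \<zero>)"
        proof (rule finsum_cong')
          fix j assume j: "j \<in> J'"
          have cs: "lam j \<in> carrier R" "v j k \<in> carrier R" "v j0 k \<in> carrier R" using j J vc l(1) by auto
          show "lam j \<otimes> w j k' = \<zero>" unfolding w_def c_def True using cs by algebra
        qed auto
        then show ?thesis using key[OF k'] by simp
      next
        case False
        then show ?thesis using key[OF k'] l(3) k' by simp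
      qed
    qed
    moreover have "\<forall>j\<in>J. \<mu> j \<in> carrier R" using l(1) sc c J by (auto simp: \<mu>_def)
    moreover have "\<exists>j\<in>J. \<mu> j \<noteq> \<zero>"
    proof -
      obtain j where j: "j \<in> J'" "lam j \<noteq> \<zero>" using l(2) by blast
      then have "\<mu> j = c \<otimes> lam j" using J by (auto simp: \<mu>_def)
      moreover have "c \<otimes> lam j \<noteq> \<zero>" using integral[of c "lam j"] c j l(1) by auto
      ultimately have "\<mu> j \<noteq> \<zero>" by simp
      then show ?thesis using j(1) J(1) by blast
    qed
    ultimately show ?thesis by blast
  qed
qed


context zpmod begin

lemma mulR_at: "(a \<otimes> b) k = (a k * b k) mod int p ^ k"
  using Zp_mult by (simp only: R_def)
lemma pe_multR: "pe p a \<otimes> pe p b = pe p (a + b)"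
  using pe_mult[OF p_prime Rc] by (simp only: R_def)
lemma pe_nonzeroR: "pe p a \<noteq> \<zero>"
  unfolding R_def by (rule pe_nonzero[OF p_prime Rc])
lemma pe_zeroR: "pe p 0 = \<one>"
  using pe_pow[OF p_prime Rc, of 0] by (simp only: R_def) simp
lemma zero_at0R: "a \<in> carrier R \<Longrightarrow> a 0 = 0"
  using Zp_zero_at0[OF p_prime Rc] by (simp only: R_def)

lemma Mset_submodule: "submodule (Mset m) R L"
proof (rule submoduleI)
  show "Mset m \<subseteq> carrier L" unfolding Mset_def by auto
  show "\<zero>\<^bsub>L\<^esub> \<in> Mset m" unfolding Mset_def by (auto simp: coords_zero zeroR)
  fix x y assume x: "x \<in> Mset m" and y: "y \<in> Mset m"
  have xc: "x \<in> carrier L" and yc: "y \<in> carrier L" using x y unfolding Mset_def by auto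
  show "\<ominus>\<^bsub>L\<^esub> x \<in> Mset m"
  proof -
    have "coords (\<ominus>\<^bsub>L\<^esub> x) i (m i) = 0" if i: "i < n" for i
    proof -
      have "coords (\<ominus>\<^bsub>L\<^esub> x) i = \<zero> \<ominus> coords x i"
        using coords_neg[OF xc i] coords_closed[OF xc i] by (simp add: R.minus_eq)
      moreover have "(\<zero> \<ominus> coords x i) (m i) = (\<zero> (m i) - coords x i (m i)) mod int p ^ (m i)"
        using coords_closed[OF xc i] by (intro minusR_at) simp_all
      ultimately show ?thesis using x i unfolding Mset_def by (simp add: zeroR)
    qed
    then show ?thesis using xc unfolding Mset_def by auto
  qed
  show "x \<oplus>\<^bsub>L\<^esub> y \<in> Mset m"
    using x y xc yc unfolding Mset_def by (auto simp: coords_add addR_at)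
  fix a assume a: "a \<in> carrier R"
  show "a \<odot>\<^bsub>L\<^esub> x \<in> Mset m"
    using x xc a unfolding Mset_def by (auto simp: coords_smult mulR_at)
qed

lemma Mset_finite: "finite (a_rcosets\<^bsub>L\<^esub> (Mset m))"
proof -
  have "(\<Prod>i<n. p ^ m i) > 0" using p_prime prime_gt_0_nat by (simp add: prod_pos)
  then show ?thesis using index_Mset[of m] card.infinite by fastforce
qed

end

locale zplie = zpmod +
  fixes br and d k :: nat
  assumes lie: "lie_algebra R L br" and n_def: "n = Suc d" and d1: "d \<ge> 1" and k1: "k \<ge> 1"
begin

lemma br_closed [simp]: "x \<in> carrier L \<Longrightarrow> y \<in> carrier L \<Longrightarrow> br x y \<in> carrier L"
  using lie unfolding lie_algebra_def by blast
lemma br_add_l: "x \<in> carrier L \<Longrightarrow> y \<in> carrier L \<Longrightarrow> z \<in> carrier L \<Longrightarrow> br (x \<oplus>\<^bsub>L\<^esub> y) z = br x z \<oplus>\<^bsub>L\<^esub> br y z"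
  using lie unfolding lie_algebra_def by blast
lemma br_add_r: "x \<in> carrier L \<Longrightarrow> y \<in> carrier L \<Longrightarrow> z \<in> carrier L \<Longrightarrow> br x (y \<oplus>\<^bsub>L\<^esub> z) = br x y \<oplus>\<^bsub>L\<^esub> br x z"
  using lie unfolding lie_algebra_def by blast
lemma br_smult_l: "a \<in> carrier R \<Longrightarrow> x \<in> carrier L \<Longrightarrow> y \<in> carrier L \<Longrightarrow> br (a \<odot>\<^bsub>L\<^esub> x) y = a \<odot>\<^bsub>L\<^esub> br x y"
  using lie unfolding lie_algebra_def by blast
lemma br_smult_r: "a \<in> carrier R \<Longrightarrow> x \<in> carrier L \<Longrightarrow> y \<in> carrier L \<Longrightarrow> br x (a \<odot>\<^bsub>L\<^esub> y) = a \<odot>\<^bsub>L\<^esub> br x y"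
  using lie unfolding lie_algebra_def by blast
lemma br_self [simp]: "x \<in> carrier L \<Longrightarrow> br x x = \<zero>\<^bsub>L\<^esub>"
  using lie unfolding lie_algebra_def by blast
lemma br_zero_l [simp]: "x \<in> carrier L \<Longrightarrow> br \<zero>\<^bsub>L\<^esub> x = \<zero>\<^bsub>L\<^esub>"
  using br_smult_l[of \<zero> "\<zero>\<^bsub>L\<^esub>" x] by simp
lemma br_zero_r [simp]: "x \<in> carrier L \<Longrightarrow> br x \<zero>\<^bsub>L\<^esub> = \<zero>\<^bsub>L\<^esub>"
  using br_smult_r[of \<zero> x "\<zero>\<^bsub>L\<^esub>"] by simp
lemma br_antisym: assumes x: "x \<in> carrier L" and y: "y \<in> carrier L"
  shows "br y x = \<ominus>\<^bsub>L\<^esub> br x y"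
proof -
  have "\<zero>\<^bsub>L\<^esub> = br (x \<oplus>\<^bsub>L\<^esub> y) (x \<oplus>\<^bsub>L\<^esub> y)" using x y by simp
  also have "\<dots> = (br x x \<oplus>\<^bsub>L\<^esub> br y x) \<oplus>\<^bsub>L\<^esub> (br x y \<oplus>\<^bsub>L\<^esub> br y y)"
    using x y by (simp add: br_add_l br_add_r del: br_self)
  also have "\<dots> = br y x \<oplus>\<^bsub>L\<^esub> br x y" using x y by (metis M.l_zero M.r_zero br_closed br_self)
  finally have "br y x \<oplus>\<^bsub>L\<^esub> br x y = \<zero>\<^bsub>L\<^esub>" by simp
  then show ?thesis using x y by (intro M.minus_equality[symmetric]) auto
qed

end


context zplie begin

definition dvk :: "nat \<Rightarrow> (nat \<Rightarrow> int) \<Rightarrow> (nat \<Rightarrow> int)" where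
  "dvk m a = (SOME z. z \<in> carrier R \<and> a = pe p m \<otimes> z)"

lemma dvk_spec: assumes "a \<in> carrier R" "a m = 0"
  shows "dvk m a \<in> carrier R \<and> a = pe p m \<otimes> dvk m a"
proof -
  have "\<exists>z. z \<in> carrier R \<and> a = pe p m \<otimes> z" using dvd_iffR[of a m] assms by blast
  then show ?thesis unfolding dvk_def by (rule someI_ex)
qed

lemma pe_cancel: "z \<in> carrier R \<Longrightarrow> z' \<in> carrier R \<Longrightarrow> pe p m \<otimes> z = pe p m \<otimes> z' \<Longrightarrow> z = z'"
  using D.m_lcancel[of "pe p m" z z'] pe_nonzeroR by simp

lemma dvk_unique: assumes "z \<in> carrier R" shows "dvk m (pe p m \<otimes> z) = z"
proof -
  have "(pe p m \<otimes> z) m = 0" using dvd_iffR[of "pe p m \<otimes> z" m] assms by auto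
  then have "dvk m (pe p m \<otimes> z) \<in> carrier R \<and> pe p m \<otimes> z = pe p m \<otimes> dvk m (pe p m \<otimes> z)"
    using assms by (intro dvk_spec) auto
  then show ?thesis using pe_cancel assms by metis
qed

lemma div_cancel_L: "x \<in> carrier L \<Longrightarrow> y \<in> carrier L \<Longrightarrow> pe p m \<odot>\<^bsub>L\<^esub> x = pe p m \<odot>\<^bsub>L\<^esub> y \<Longrightarrow> x = y"
  using smult_cancel[of "pe p m" x y] pe_nonzeroR by simp

lemma pe_smult_smult: "x \<in> carrier L \<Longrightarrow> pe p a \<odot>\<^bsub>L\<^esub> (pe p b \<odot>\<^bsub>L\<^esub> x) = pe p (a + b) \<odot>\<^bsub>L\<^esub> x"
  using smult_assoc1[of "pe p a" "pe p b" x] pe_multR by simp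

definition mab :: "nat \<Rightarrow> nat" where "mab i = (if i = d then d * k else 0)"
definition sab :: "'a \<Rightarrow> nat \<Rightarrow> (nat \<Rightarrow> int)" where
  "sab x i = (if i = 0 then dvk (d * k) (coords x d) else coords x (i - 1))"
definition Tab :: "'a \<Rightarrow> 'a" where
  "Tab x = (\<Oplus>\<^bsub>L\<^esub>i\<in>{..<n}. sab x i \<odot>\<^bsub>L\<^esub> e i)"

lemma d_lt: "d < n" using n_def by simp

lemma Mab_iff: "x \<in> Mset mab \<longleftrightarrow> x \<in> carrier L \<and> coords x d (d * k) = 0"
  unfolding Mset_def mab_def using d_lt by (auto simp: zero_at0R)

lemma sab_closed: assumes x: "x \<in> Mset mab" and i: "i < n" shows "sab x i \<in> carrier R"
proof -
  have xc: "x \<in> carrier L" "coords x d (d * k) = 0" using x Mab_iff by auto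
  show ?thesis
  proof (cases "i = 0")
    case True then show ?thesis using dvk_spec[OF coords_closed[OF xc(1) d_lt] xc(2)] by (simp add: sab_def)
  next
    case False then show ?thesis using xc i by (simp add: sab_def)
  qed
qed

lemma sab_pi: "x \<in> Mset mab \<Longrightarrow> sab x \<in> {..<n} \<rightarrow> carrier R"
  using sab_closed by auto

lemma Tab_closed: "x \<in> Mset mab \<Longrightarrow> Tab x \<in> carrier L"
  unfolding Tab_def by (rule lc_closed[OF sab_pi])

lemma coords_Tab: "x \<in> Mset mab \<Longrightarrow> i < n \<Longrightarrow> coords (Tab x) i = sab x i"
  unfolding Tab_def by (rule coords_lc[OF sab_pi])

lemma Mab_sub: "submodule (Mset mab) R L" by (rule Mset_submodule)

lemma Mab_carrier: "x \<in> Mset mab \<Longrightarrow> x \<in> carrier L" using Mab_iff by auto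

lemma Tab_add: assumes x: "x \<in> Mset mab" and y: "y \<in> Mset mab"
  shows "Tab (x \<oplus>\<^bsub>L\<^esub> y) = Tab x \<oplus>\<^bsub>L\<^esub> Tab y"
proof -
  have xy: "x \<oplus>\<^bsub>L\<^esub> y \<in> Mset mab" using submodule.axioms(1)[OF Mab_sub] x y
    by (meson Mab_sub submoduleE(5))
  have xc: "x \<in> carrier L" "y \<in> carrier L" using x y Mab_carrier by auto
  show ?thesis
  proof (rule eq_coords)
    show "Tab (x \<oplus>\<^bsub>L\<^esub> y) \<in> carrier L" using Tab_closed[OF xy] .
    show "Tab x \<oplus>\<^bsub>L\<^esub> Tab y \<in> carrier L" using Tab_closed x y by simp
    fix i assume i: "i < n"
    have "coords (Tab (x \<oplus>\<^bsub>L\<^esub> y)) i = sab (x \<oplus>\<^bsub>L\<^esub> y) i" by (rule coords_Tab[OF xy i])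
    also have "\<dots> = sab x i \<oplus> sab y i"
    proof (cases "i = 0")
      case True
      have sx: "dvk (d*k) (coords x d) \<in> carrier R \<and> coords x d = pe p (d*k) \<otimes> dvk (d*k) (coords x d)"
        using x Mab_iff dvk_spec coords_closed d_lt by blast
      have sy: "dvk (d*k) (coords y d) \<in> carrier R \<and> coords y d = pe p (d*k) \<otimes> dvk (d*k) (coords y d)"
        using y Mab_iff dvk_spec coords_closed d_lt by blast
      have "coords (x \<oplus>\<^bsub>L\<^esub> y) d = pe p (d*k) \<otimes> (dvk (d*k) (coords x d) \<oplus> dvk (d*k) (coords y d))"
        using coords_add[OF xc d_lt] sx sy by (simp add: R.r_distr)
      then show ?thesis using True sx sy dvk_unique by (simp add: sab_def)
    next
      case False
      then show ?thesis using coords_add[OF xc, of "i - 1"] i by (simp add: sab_def)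
    qed
    also have "\<dots> = coords (Tab x \<oplus>\<^bsub>L\<^esub> Tab y) i"
      using coords_add[OF Tab_closed[OF x] Tab_closed[OF y] i] coords_Tab[OF x i] coords_Tab[OF y i] by simp
    finally show "coords (Tab (x \<oplus>\<^bsub>L\<^esub> y)) i = coords (Tab x \<oplus>\<^bsub>L\<^esub> Tab y) i" .
  qed
qed

lemma Tab_smult: assumes a: "a \<in> carrier R" and x: "x \<in> Mset mab"
  shows "Tab (a \<odot>\<^bsub>L\<^esub> x) = a \<odot>\<^bsub>L\<^esub> Tab x"
proof -
  have ax: "a \<odot>\<^bsub>L\<^esub> x \<in> Mset mab" using a x by (meson Mab_sub submoduleE(4))
  have xc: "x \<in> carrier L" using x Mab_carrier by auto
  show ?thesis
  proof (rule eq_coords)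
    show "Tab (a \<odot>\<^bsub>L\<^esub> x) \<in> carrier L" using Tab_closed[OF ax] .
    show "a \<odot>\<^bsub>L\<^esub> Tab x \<in> carrier L" using Tab_closed[OF x] a by simp
    fix i assume i: "i < n"
    have "coords (Tab (a \<odot>\<^bsub>L\<^esub> x)) i = sab (a \<odot>\<^bsub>L\<^esub> x) i" by (rule coords_Tab[OF ax i])
    also have "\<dots> = a \<otimes> sab x i"
    proof (cases "i = 0")
      case True
      have sx: "dvk (d*k) (coords x d) \<in> carrier R \<and> coords x d = pe p (d*k) \<otimes> dvk (d*k) (coords x d)"
        using x Mab_iff dvk_spec coords_closed d_lt by blast
      have "coords (a \<odot>\<^bsub>L\<^esub> x) d = pe p (d*k) \<otimes> (a \<otimes> dvk (d*k) (coords x d))"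
        using coords_smult[OF a xc d_lt] sx a by (metis R.m_lcomm pe_carrierR)
      then show ?thesis using True sx dvk_unique a by (simp add: sab_def)
    next
      case False
      then show ?thesis using coords_smult[OF a xc, of "i - 1"] i by (simp add: sab_def)
    qed
    also have "\<dots> = coords (a \<odot>\<^bsub>L\<^esub> Tab x) i"
      using coords_smult[OF a Tab_closed[OF x] i] coords_Tab[OF x i] by simp
    finally show "coords (Tab (a \<odot>\<^bsub>L\<^esub> x)) i = coords (a \<odot>\<^bsub>L\<^esub> Tab x) i" .
  qed
qed

lemma Tab_zero: "Tab \<zero>\<^bsub>L\<^esub> = \<zero>\<^bsub>L\<^esub>"
proof -
  have z: "\<zero>\<^bsub>L\<^esub> \<in> Mset mab" unfolding Mset_def by (auto simp: coords_zero zeroR)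
  have "Tab \<zero>\<^bsub>L\<^esub> = Tab (\<zero> \<odot>\<^bsub>L\<^esub> \<zero>\<^bsub>L\<^esub>)" by simp
  also have "\<dots> = \<zero> \<odot>\<^bsub>L\<^esub> Tab \<zero>\<^bsub>L\<^esub>" using Tab_smult[OF R.zero_closed z] .
  also have "\<dots> = \<zero>\<^bsub>L\<^esub>" using Tab_closed[OF z] by simp
  finally show ?thesis .
qed

lemma Tab_iter:
  assumes all: "\<And>j. (Tab ^^ j) x \<in> Mset mab"
  shows "j \<le> Suc d \<Longrightarrow> i \<le> d \<Longrightarrow> coords ((Tab ^^ j) x) i =
     (if j \<le> i then coords x (i - j) else dvk (d * k) (coords x (Suc d + i - j)))"
proof (induction j arbitrary: i)
  case 0 then show ?case by simp
next
  case (Suc j)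
  have y: "(Tab ^^ j) x \<in> Mset mab" by (rule all)
  have "coords ((Tab ^^ Suc j) x) i = sab ((Tab ^^ j) x) i"
    using coords_Tab[OF y, of i] Suc.prems n_def by simp
  also have "\<dots> = (if Suc j \<le> i then coords x (i - Suc j) else dvk (d * k) (coords x (Suc d + i - Suc j)))"
  proof (cases "i = 0")
    case True
    then have "sab ((Tab ^^ j) x) i = dvk (d*k) (coords ((Tab ^^ j) x) d)" by (simp add: sab_def)
    also have "coords ((Tab ^^ j) x) d = coords x (d - j)" using Suc.IH[of d] Suc.prems by simp
    finally show ?thesis using True Suc.prems by simp
  next
    case False
    then have "sab ((Tab ^^ j) x) i = coords ((Tab ^^ j) x) (i - 1)" by (simp add: sab_def)
    also have "\<dots> = (if j \<le> i - 1 then coords x (i - 1 - j) else dvk (d * k) (coords x (Suc d + (i - 1) - j)))"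
      using Suc.IH[of "i - 1"] Suc.prems by simp
    finally show ?thesis using False Suc.prems
      by (auto simp: Suc_diff_Suc)
  qed
  finally show ?case .
qed

end

context zplie begin

lemma ideal_zero: assumes "submodule I R L" shows "\<zero>\<^bsub>L\<^esub> \<in> I"
proof -
  obtain x where x: "x \<in> I" using submoduleE(2)[OF assms] by blast
  then have "\<zero> \<odot>\<^bsub>L\<^esub> x \<in> I" using submoduleE(4)[OF assms] by blast
  moreover have "x \<in> carrier L" using x submoduleE(1)[OF assms] by blast
  ultimately show ?thesis by simp
qed

lemma iter_in: assumes "f ` I \<subseteq> I" "x \<in> I" shows "(f ^^ j) x \<in> I"
  using assms by (induction j) auto

lemma abelian_case: assumes ab: "\<forall>x\<in>carrier L. \<forall>y\<in>carrier L. br x y = \<zero>\<^bsub>L\<^esub>"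
  shows "\<exists>M \<phi>. simple_virtual_endo R L br M \<phi> \<and> lattice_index L M = p ^ (d * k)"
proof (intro exI conjI)
  show "lattice_index L (Mset mab) = p ^ (d * k)"
  proof -
    have "(\<Prod>i<n. p ^ mab i) = (\<Prod>i<d. p ^ mab i) * p ^ mab d" using n_def by simp
    also have "(\<Prod>i<d. p ^ mab i) = 1" by (intro prod.neutral) (auto simp: mab_def)
    finally show ?thesis unfolding lattice_index_def index_Mset by (simp add: mab_def)
  qed
  have Mc: "\<And>x. x \<in> Mset mab \<Longrightarrow> x \<in> carrier L" by (rule Mab_carrier)
  have ve: "virtual_endo R L br (Mset mab) Tab"
    unfolding virtual_endo_def lie_subalgebra_def
  proof (intro conjI ballI)
    show "submodule (Mset mab) R L" by (rule Mab_sub)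
    show "finite (a_rcosets\<^bsub>L\<^esub> Mset mab)" by (rule Mset_finite)
    fix x assume x: "x \<in> Mset mab"
    show "Tab x \<in> carrier L" by (rule Tab_closed[OF x])
    {
      fix y assume y: "y \<in> Mset mab"
      show "br x y \<in> Mset mab" using ab x y Mc ideal_zero[OF Mab_sub] by simp
      show "Tab (x \<oplus>\<^bsub>L\<^esub> y) = Tab x \<oplus>\<^bsub>L\<^esub> Tab y" by (rule Tab_add[OF x y])
      show "Tab (br x y) = br (Tab x) (Tab y)" using ab x y Mc Tab_closed Tab_zero by simp
    }
    fix a assume a: "a \<in> carrier R"
    show "Tab (a \<odot>\<^bsub>L\<^esub> x) = a \<odot>\<^bsub>L\<^esub> Tab x" by (rule Tab_smult[OF a x])
  qed
  show "simple_virtual_endo R L br (Mset mab) Tab"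
    unfolding simple_virtual_endo_def
  proof (intro conjI allI impI ve)
    fix I assume h: "lie_ideal R L br I \<and> phi_invariant L (Mset mab) Tab I"
    have sub: "submodule I R L" using h unfolding lie_ideal_def by blast
    have "I \<subseteq> pow_dom L (Mset mab) Tab (Suc 0)" using h unfolding phi_invariant_def by blast
    then have IM: "I \<subseteq> Mset mab" by auto
    have TI: "Tab ` I \<subseteq> I" using h unfolding phi_invariant_def by blast
    have IL: "I \<subseteq> carrier L" using submoduleE(1)[OF sub] .
    have step: "\<exists>y\<in>I. x = pe p (d * k) \<odot>\<^bsub>L\<^esub> y" if x: "x \<in> I" for x
    proof -
      have all: "\<And>j. (Tab ^^ j) x \<in> Mset mab" using iter_in[OF TI x] IM by blast
      have dv: "coords x i (d * k) = 0" if i: "i \<le> d" for i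
      proof -
        have "coords ((Tab ^^ (d - i)) x) d = coords x i"
          using Tab_iter[OF all, of "d - i" d] i by simp
        moreover have "coords ((Tab ^^ (d - i)) x) d (d * k) = 0" using all[of "d - i"] Mab_iff by blast
        ultimately show ?thesis by simp
      qed
      let ?y = "(Tab ^^ Suc d) x"
      have yI: "?y \<in> I" using iter_in[OF TI x] .
      have "x = pe p (d * k) \<odot>\<^bsub>L\<^esub> ?y"
      proof (rule eq_coords)
        show xc: "x \<in> carrier L" using x IL by blast
        show "pe p (d * k) \<odot>\<^bsub>L\<^esub> ?y \<in> carrier L" using yI IL by auto
        fix i assume i: "i < n"
        then have i': "i \<le> d" using n_def by simp
        have "coords (pe p (d * k) \<odot>\<^bsub>L\<^esub> ?y) i = pe p (d * k) \<otimes> coords ?y i"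
          using coords_smult[of "pe p (d*k)" ?y i] yI IL i by auto
        also have "coords ?y i = dvk (d * k) (coords x i)"
          using Tab_iter[OF all, of "Suc d" i] i' by simp
        also have "pe p (d * k) \<otimes> dvk (d * k) (coords x i) = coords x i"
          using dvk_spec[OF coords_closed[OF xc i] dv[OF i']] by simp
        finally show "coords x i = coords (pe p (d * k) \<odot>\<^bsub>L\<^esub> ?y) i" by simp
      qed
      then show ?thesis using yI by blast
    qed
    have iter: "\<exists>y\<in>I. x = pe p (j * (d * k)) \<odot>\<^bsub>L\<^esub> y" if x: "x \<in> I" for j x
      using x
    proof (induction j arbitrary: x)
      case 0
      then have "x = \<one> \<odot>\<^bsub>L\<^esub> x" using IL by auto
      then show ?case using 0 pe_zeroR by auto
    next
      case (Suc j)
      obtain y where y: "y \<in> I" "x = pe p (j * (d * k)) \<odot>\<^bsub>L\<^esub> y" using Suc.IH[OF Suc.prems] by blast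
      obtain z where z: "z \<in> I" "y = pe p (d * k) \<odot>\<^bsub>L\<^esub> z" using step[OF y(1)] by blast
      have "x = pe p (Suc j * (d * k)) \<odot>\<^bsub>L\<^esub> z"
        using y z pe_smult_smult[of z "j * (d * k)" "d * k"] IL by (auto simp: add.commute)
      then show ?case using z by blast
    qed
    have "x = \<zero>\<^bsub>L\<^esub>" if x: "x \<in> I" for x
    proof (rule L_div_all_zero[of x "\<lambda>j. j * (d * k)"])
      show "x \<in> carrier L" using x IL by blast
      show "\<exists>y\<in>carrier L. x = pe p (j * (d * k)) \<odot>\<^bsub>L\<^esub> y" for j using iter[OF x, of j] IL by blast
      show "j \<le> j * (d * k)" for j using d1 k1 by simp
    qed
    then show "I = {\<zero>\<^bsub>L\<^esub>}" using ideal_zero[OF sub] by blast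
  qed
qed

end

lemma unit_of: assumes pp: "prime p" and cr: "cring (Zp p)"
  and g: "g \<in> carrier (Zp p)" and x: "x = pe p v \<otimes>\<^bsub>Zp p\<^esub> g" and xv: "x (Suc v) \<noteq> 0"
  shows "g 1 \<noteq> 0"
proof
  assume u1: "g 1 = 0"
  have "g (Suc v) mod int p = g 1" using Zp_compat_le[OF pp cr g, of 1 "Suc v"] by simp
  then have "int p dvd g (Suc v)" using u1 by (simp add: dvd_eq_mod_eq_0)
  then have "int p ^ Suc v dvd int p ^ v * g (Suc v)" by (simp add: power_Suc mult.commute)
  then have e1: "(int p ^ v * g (Suc v)) mod int p ^ Suc v = 0" by (simp only: dvd_eq_mod_eq_0)
  have "x (Suc v) = (int p ^ v * g (Suc v)) mod int p ^ Suc v" using x pe_mult_at[OF pp cr] by simp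
  then have "x (Suc v) = 0" using e1 by simp
  then show False using xv by simp
qed

context zpmod begin

lemma lin_finsum:
  assumes hc: "\<And>x. x \<in> carrier L \<Longrightarrow> h x \<in> carrier R"
    and ha: "\<And>x y. x \<in> carrier L \<Longrightarrow> y \<in> carrier L \<Longrightarrow> h (x \<oplus>\<^bsub>L\<^esub> y) = h x \<oplus> h y"
    and hs: "\<And>c x. c \<in> carrier R \<Longrightarrow> x \<in> carrier L \<Longrightarrow> h (c \<odot>\<^bsub>L\<^esub> x) = c \<otimes> h x"
    and J: "finite J" and lam: "lam \<in> J \<rightarrow> carrier R" and X: "X \<in> J \<rightarrow> carrier L"
  shows "h (\<Oplus>\<^bsub>L\<^esub>j\<in>J. lam j \<odot>\<^bsub>L\<^esub> X j) = (\<Oplus>j\<in>J. lam j \<otimes> h (X j))"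
  using J lam X
proof (induction J rule: finite_induct)
  case empty
  have "h \<zero>\<^bsub>L\<^esub> = h (\<zero> \<odot>\<^bsub>L\<^esub> \<zero>\<^bsub>L\<^esub>)" by simp
  also have "\<dots> = \<zero>" using hs[of \<zero> "\<zero>\<^bsub>L\<^esub>"] hc[of "\<zero>\<^bsub>L\<^esub>"] by simp
  finally show ?case by simp
next
  case (insert j J)
  have f1: "(\<lambda>j. lam j \<odot>\<^bsub>L\<^esub> X j) \<in> J \<rightarrow> carrier L" using insert.prems by (auto simp: Pi_iff)
  have f2: "(\<lambda>j. lam j \<otimes> h (X j)) \<in> J \<rightarrow> carrier R" using insert.prems hc by (auto simp: Pi_iff)
  have lj: "lam j \<in> carrier R" "X j \<in> carrier L" using insert.prems by auto
  have "h (\<Oplus>\<^bsub>L\<^esub>j\<in>insert j J. lam j \<odot>\<^bsub>L\<^esub> X j) = h (lam j \<odot>\<^bsub>L\<^esub> X j \<oplus>\<^bsub>L\<^esub> (\<Oplus>\<^bsub>L\<^esub>j\<in>J. lam j \<odot>\<^bsub>L\<^esub> X j))"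
    using insert.hyps f1 lj by (subst M.finsum_insert) auto
  also have "\<dots> = lam j \<otimes> h (X j) \<oplus> h (\<Oplus>\<^bsub>L\<^esub>j\<in>J. lam j \<odot>\<^bsub>L\<^esub> X j)"
    using ha[of "lam j \<odot>\<^bsub>L\<^esub> X j"] hs lj f1 by simp
  also have "h (\<Oplus>\<^bsub>L\<^esub>j\<in>J. lam j \<odot>\<^bsub>L\<^esub> X j) = (\<Oplus>j\<in>J. lam j \<otimes> h (X j))"
    using insert.IH insert.prems by (auto simp: Pi_iff)
  also have "lam j \<otimes> h (X j) \<oplus> (\<Oplus>j\<in>J. lam j \<otimes> h (X j)) = (\<Oplus>j\<in>insert j J. lam j \<otimes> h (X j))"
    using insert.hyps f2 lj hc by (subst R.finsum_insert) auto
  finally show ?case .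
qed

lemma coords_lin_finsum:
  assumes "i < n" "finite J" "lam \<in> J \<rightarrow> carrier R" "X \<in> J \<rightarrow> carrier L"
  shows "coords (\<Oplus>\<^bsub>L\<^esub>j\<in>J. lam j \<odot>\<^bsub>L\<^esub> X j) i = (\<Oplus>j\<in>J. lam j \<otimes> coords (X j) i)"
  using assms by (intro lin_finsum[where h = "\<lambda>x. coords x i"]) (auto simp: coords_add coords_smult)

lemma sub_finsum:
  assumes H: "submodule H R L" and J: "finite J" and lam: "lam \<in> J \<rightarrow> carrier R" and X: "X \<in> J \<rightarrow> H"
  shows "(\<Oplus>\<^bsub>L\<^esub>j\<in>J. lam j \<odot>\<^bsub>L\<^esub> X j) \<in> H"
  using J lam X
proof (induction J rule: finite_induct)
  case empty
  obtain x where x: "x \<in> H" using submoduleE(2)[OF H] by blast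
  then have "\<zero> \<odot>\<^bsub>L\<^esub> x \<in> H" using submoduleE(4)[OF H] by blast
  moreover have "x \<in> carrier L" using x submoduleE(1)[OF H] by blast
  ultimately show ?case by simp
next
  case (insert j J)
  have HL: "H \<subseteq> carrier L" using submoduleE(1)[OF H] .
  have f1: "(\<lambda>j. lam j \<odot>\<^bsub>L\<^esub> X j) \<in> J \<rightarrow> carrier L" using insert.prems HL by (auto simp: Pi_iff)
  have lj: "lam j \<in> carrier R" "X j \<in> H" using insert.prems by auto
  have "(\<Oplus>\<^bsub>L\<^esub>j\<in>insert j J. lam j \<odot>\<^bsub>L\<^esub> X j) = lam j \<odot>\<^bsub>L\<^esub> X j \<oplus>\<^bsub>L\<^esub> (\<Oplus>\<^bsub>L\<^esub>j\<in>J. lam j \<odot>\<^bsub>L\<^esub> X j)"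
    using insert.hyps f1 lj HL by (subst M.finsum_insert) auto
  moreover have "(\<Oplus>\<^bsub>L\<^esub>j\<in>J. lam j \<odot>\<^bsub>L\<^esub> X j) \<in> H" using insert.IH insert.prems by (auto simp: Pi_iff)
  moreover have "lam j \<odot>\<^bsub>L\<^esub> X j \<in> H" using lj submoduleE(4)[OF H] by blast
  ultimately show ?case using submoduleE(5)[OF H] by simp
qed

definition Fg :: "(nat \<Rightarrow> nat \<Rightarrow> int) \<Rightarrow> 'a \<Rightarrow> nat \<Rightarrow> int" where
  "Fg g x = (\<Oplus>i\<in>{..<n}. g i \<otimes> coords x i)"

lemma Fg_closed: "(\<And>i. i < n \<Longrightarrow> g i \<in> carrier R) \<Longrightarrow> x \<in> carrier L \<Longrightarrow> Fg g x \<in> carrier R"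
  unfolding Fg_def by (intro R.finsum_closed) auto

lemma Fg_add: assumes g: "\<And>i. i < n \<Longrightarrow> g i \<in> carrier R" and x: "x \<in> carrier L" and y: "y \<in> carrier L"
  shows "Fg g (x \<oplus>\<^bsub>L\<^esub> y) = Fg g x \<oplus> Fg g y"
proof -
  have "Fg g (x \<oplus>\<^bsub>L\<^esub> y) = (\<Oplus>i\<in>{..<n}. g i \<otimes> coords x i \<oplus> g i \<otimes> coords y i)"
    unfolding Fg_def using g x y by (intro R.finsum_cong') (auto simp: coords_add R.r_distr)
  also have "\<dots> = Fg g x \<oplus> Fg g y" unfolding Fg_def using g x y by (intro R.finsum_addf) auto
  finally show ?thesis .
qed

lemma Fg_smult: assumes g: "\<And>i. i < n \<Longrightarrow> g i \<in> carrier R" and c: "c \<in> carrier R" and x: "x \<in> carrier L"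
  shows "Fg g (c \<odot>\<^bsub>L\<^esub> x) = c \<otimes> Fg g x"
proof -
  have "Fg g (c \<odot>\<^bsub>L\<^esub> x) = (\<Oplus>i\<in>{..<n}. c \<otimes> (g i \<otimes> coords x i))"
    unfolding Fg_def using g x c by (intro R.finsum_cong') (auto simp: coords_smult R.m_lcomm)
  also have "\<dots> = c \<otimes> Fg g x" unfolding Fg_def using g x c by (intro R.finsum_rdistr[symmetric]) auto
  finally show ?thesis .
qed

end

locale zpna = zplie +
  fixes A and a :: "nat \<Rightarrow> 'a"
  assumes A_ideal: "lie_ideal R L br A" and A_ab: "abelian_subset L br A"
    and A_basis: "is_basis R L A d a"
begin

lemma A_sub: "submodule A R L" using A_ideal unfolding lie_ideal_def by blast
lemma A_L: "A \<subseteq> carrier L" using submoduleE(1)[OF A_sub] .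
lemma a_A: "j < d \<Longrightarrow> a j \<in> A" using A_basis unfolding is_basis_def by blast
lemma a_L: "j < d \<Longrightarrow> a j \<in> carrier L" using a_A A_L by blast

lemma functional_exists:
  "\<exists>g i0 u. (\<forall>i<n. g i \<in> carrier R) \<and> i0 < n \<and> u \<in> carrier R \<and> g i0 \<otimes> u = \<one> \<and> (\<forall>j<d. Fg g (a j) = \<zero>)"
proof -
  have "\<exists>lam. (\<forall>i\<in>{..<n}. lam i \<in> carrier R) \<and> (\<exists>i\<in>{..<n}. lam i \<noteq> \<zero>) \<and>
      (\<forall>j\<in>{..<d}. (\<Oplus>i\<in>{..<n}. lam i \<otimes> coords (a j) i) = \<zero>)"
  proof (rule D.dep)
    show "card {..<d} < card {..<n}" using n_def by simp
    fix i j assume "i \<in> {..<n}" "j \<in> {..<d}"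
    then show "coords (a j) i \<in> carrier R" using a_L by auto
  qed auto
  then obtain f where f: "\<And>i. i < n \<Longrightarrow> f i \<in> carrier R" "\<exists>i<n. f i \<noteq> \<zero>"
    "\<And>j. j < d \<Longrightarrow> (\<Oplus>i\<in>{..<n}. f i \<otimes> coords (a j) i) = \<zero>" by auto
  obtain i1 where i1: "i1 < n" "f i1 \<noteq> \<zero>" using f(2) by blast
  obtain N where N: "f i1 N \<noteq> 0" using i1(2) by (auto simp: zeroR)
  define P where "P = (\<lambda>m. \<forall>i<n. f i m = 0)"
  have P0: "P 0" unfolding P_def using f(1) zero_at0R by blast
  have Pb: "y \<le> N" if "P y" for y
  proof (rule ccontr)
    assume "\<not> y \<le> N"
    then have "f i1 y mod int p ^ N = f i1 N" using compat_leR[OF f(1)[OF i1(1)], of N y] by simp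
    moreover have "f i1 y = 0" using that i1 unfolding P_def by blast
    ultimately show False using N by simp
  qed
  define v where "v = Greatest P"
  have Pv: "P v" unfolding v_def by (rule GreatestI_nat[of P 0 N, OF P0 Pb])
  have nPv: "\<not> P (Suc v)"
  proof
    assume "P (Suc v)"
    then have "Suc v \<le> v" unfolding v_def by (rule Greatest_le_nat[of P _ N, OF _ Pb])
    then show False by simp
  qed
  define g where "g = (\<lambda>i. dvk v (f i))"
  have g: "\<And>i. i < n \<Longrightarrow> g i \<in> carrier R \<and> f i = pe p v \<otimes> g i"
    unfolding g_def using dvk_spec f(1) Pv unfolding P_def by blast
  obtain i0 where i0: "i0 < n" "f i0 (Suc v) \<noteq> 0" using nPv unfolding P_def by blast
  have "g i0 1 \<noteq> 0"
    using unit_of[OF p_prime Rc, of "g i0" "f i0" v] g[OF i0(1)] i0(2) R_def by auto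
  then obtain u where u: "u \<in> carrier R" "g i0 \<otimes> u = \<one>"
    using unit_inv[OF p_prime Rc, of "g i0"] g[OF i0(1)] R_def by auto
  have "Fg g (a j) = \<zero>" if j: "j < d" for j
  proof -
    have "pe p v \<otimes> Fg g (a j) = (\<Oplus>i\<in>{..<n}. pe p v \<otimes> (g i \<otimes> coords (a j) i))"
      unfolding Fg_def using g a_L[OF j] by (intro R.finsum_rdistr) auto
    also have "\<dots> = (\<Oplus>i\<in>{..<n}. f i \<otimes> coords (a j) i)"
      using g a_L[OF j] by (intro R.finsum_cong') (auto simp: R.m_assoc[symmetric])
    also have "\<dots> = \<zero>" using f(3)[OF j] .
    finally have "pe p v \<otimes> Fg g (a j) = \<zero>" .
    then show ?thesis using D.integral[of "pe p v" "Fg g (a j)"] pe_nonzeroR Fg_closed[of g "a j"] g a_L[OF j] by auto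
  qed
  then show ?thesis using g i0(1) u by blast
qed

end

locale zpna2 = zpna +
  fixes g :: "nat \<Rightarrow> nat \<Rightarrow> int" and i0 :: nat and u :: "nat \<Rightarrow> int"
  assumes g_closed: "\<And>i. i < n \<Longrightarrow> g i \<in> carrier R" and i0: "i0 < n"
    and u: "u \<in> carrier R" and gu: "g i0 \<otimes> u = \<one>"
    and Fa: "\<And>j. j < d \<Longrightarrow> Fg g (a j) = \<zero>"
begin

abbreviation F where "F \<equiv> Fg g"

lemma F_closed [simp]: "x \<in> carrier L \<Longrightarrow> F x \<in> carrier R"
  using Fg_closed g_closed by blast
lemma F_add: "x \<in> carrier L \<Longrightarrow> y \<in> carrier L \<Longrightarrow> F (x \<oplus>\<^bsub>L\<^esub> y) = F x \<oplus> F y"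
  using Fg_add g_closed by blast
lemma F_smult: "c \<in> carrier R \<Longrightarrow> x \<in> carrier L \<Longrightarrow> F (c \<odot>\<^bsub>L\<^esub> x) = c \<otimes> F x"
  using Fg_smult g_closed by blast

lemma gi0_nz: "g i0 \<noteq> \<zero>"
  using gu u by (metis D.one_not_zero R.l_null)

definition t where "t = u \<odot>\<^bsub>L\<^esub> e i0"

lemma t_closed [simp]: "t \<in> carrier L" unfolding t_def using u i0 by simp

lemma coords_t: "i < n \<Longrightarrow> coords t i = (if i = i0 then u else \<zero>)"
  unfolding t_def using coords_smult[OF u e_closed[OF i0]] coords_e[OF i0] u by simp

lemma F_single: assumes x: "x \<in> carrier L" and h: "\<And>i. i < n \<Longrightarrow> i \<noteq> i0 \<Longrightarrow> coords x i = \<zero>"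
  shows "F x = g i0 \<otimes> coords x i0"
proof -
  have "F x = (\<Oplus>i\<in>{..<n}. if i0 = i then g i \<otimes> coords x i else \<zero>)"
    unfolding Fg_def using h x g_closed by (intro R.finsum_cong') auto
  also have "\<dots> = g i0 \<otimes> coords x i0"
    using i0 x g_closed by (intro R.finsum_singleton[of i0 "{..<n}" "\<lambda>i. g i \<otimes> coords x i"]) auto
  finally show ?thesis .
qed

lemma F_t: "F t = \<one>"
  using F_single[OF t_closed] coords_t i0 gu by simp

definition B where "B = {x \<in> carrier L. F x = \<zero>}"

lemma B_L: "x \<in> B \<Longrightarrow> x \<in> carrier L" unfolding B_def by simp

lemma B_sub: "submodule B R L"
proof (rule submoduleI)
  show "B \<subseteq> carrier L" unfolding B_def by auto
  show "\<zero>\<^bsub>L\<^esub> \<in> B" unfolding B_def using F_smult[of \<zero> "\<zero>\<^bsub>L\<^esub>"] by simp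
  fix x y assume x: "x \<in> B" and y: "y \<in> B"
  show "\<ominus>\<^bsub>L\<^esub> x \<in> B" using x F_smult[of "\<ominus> \<one>" x] smult_l_minus[of \<one> x] unfolding B_def
    by (simp add: R.l_minus)
  show "x \<oplus>\<^bsub>L\<^esub> y \<in> B" using x y F_add unfolding B_def by simp
  fix c assume c: "c \<in> carrier R"
  show "c \<odot>\<^bsub>L\<^esub> x \<in> B" using x c F_smult unfolding B_def by simp
qed

lemma A_B: "A \<subseteq> B"
proof
  fix x assume x: "x \<in> A"
  then obtain c where c: "c \<in> {..<d} \<rightarrow>\<^sub>E carrier R" "x = (\<Oplus>\<^bsub>L\<^esub>j\<in>{..<d}. c j \<odot>\<^bsub>L\<^esub> a j)"
    using A_basis unfolding is_basis_def by blast
  have "F x = (\<Oplus>j\<in>{..<d}. c j \<otimes> F (a j))"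
    unfolding c(2) using c(1) a_L by (intro lin_finsum) (auto simp: F_add F_smult)
  also have "\<dots> = (\<Oplus>j\<in>{..<d}. \<zero>)" using c(1) a_L Fa by (intro R.finsum_cong') (auto simp: PiE_iff)
  finally show "x \<in> B" using x A_L unfolding B_def by auto
qed

lemma B_sat: assumes x: "x \<in> B" shows "\<exists>c\<in>carrier R. c \<noteq> \<zero> \<and> c \<odot>\<^bsub>L\<^esub> x \<in> A"
proof -
  have xL: "x \<in> carrier L" using x B_L by blast
  define X where "X = (\<lambda>j. if j = d then x else a j)"
  define K where "K = {..<n} - {i0}"
  have cK: "card K = d" unfolding K_def using i0 n_def by simp
  have XL: "X \<in> {..d} \<rightarrow> carrier L" unfolding X_def using xL a_L by auto
  have "\<exists>lam. (\<forall>j\<in>{..d}. lam j \<in> carrier R) \<and> (\<exists>j\<in>{..d}. lam j \<noteq> \<zero>) \<and>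
      (\<forall>i\<in>K. (\<Oplus>j\<in>{..d}. lam j \<otimes> coords (X j) i) = \<zero>)"
  proof (rule D.dep)
    show "finite K" unfolding K_def by simp
    show "card K < card {..d}" using cK by simp
    fix j i assume j: "j \<in> {..d}" and i: "i \<in> K"
    have "X j \<in> carrier L" using XL j by blast
    then show "coords (X j) i \<in> carrier R" using i unfolding K_def by auto
  qed simp
  then obtain lam where l: "\<And>j. j \<le> d \<Longrightarrow> lam j \<in> carrier R" "\<exists>j\<in>{..d}. lam j \<noteq> \<zero>"
    "\<And>i. i \<in> K \<Longrightarrow> (\<Oplus>j\<in>{..d}. lam j \<otimes> coords (X j) i) = \<zero>" by auto
  have lp: "lam \<in> {..d} \<rightarrow> carrier R" using l(1) by auto
  define y where "y = (\<Oplus>\<^bsub>L\<^esub>j\<in>{..d}. lam j \<odot>\<^bsub>L\<^esub> X j)"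
  have yL: "y \<in> carrier L" unfolding y_def using lp XL by (intro M.finsum_closed) (auto simp: Pi_iff)
  have cy: "coords y i = \<zero>" if i: "i < n" "i \<noteq> i0" for i
  proof -
    have "coords y i = (\<Oplus>j\<in>{..d}. lam j \<otimes> coords (X j) i)"
      unfolding y_def using i lp XL by (intro coords_lin_finsum) auto
    also have "\<dots> = \<zero>" using l(3) i unfolding K_def by simp
    finally show ?thesis .
  qed
  have "F y = (\<Oplus>j\<in>{..d}. lam j \<otimes> F (X j))"
    unfolding y_def using lp XL by (intro lin_finsum) (auto simp: F_add F_smult)
  also have "\<dots> = (\<Oplus>j\<in>{..d}. \<zero>)"
  proof (intro R.finsum_cong')
    fix j assume j: "j \<in> {..d}"
    have "F (X j) = \<zero>" using x Fa j unfolding X_def B_def by (cases "j = d") auto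
    then show "lam j \<otimes> F (X j) = \<zero>" using l(1) j by simp
  qed auto
  finally have "F y = \<zero>" by simp
  then have "g i0 \<otimes> coords y i0 = \<zero>" using F_single[OF yL cy] by simp
  then have "coords y i0 = \<zero>" using D.integral[of "g i0" "coords y i0"] gi0_nz g_closed i0 yL by auto
  then have y0: "y = \<zero>\<^bsub>L\<^esub>" using zero_coords[OF yL] cy by metis
  define S where "S = (\<Oplus>\<^bsub>L\<^esub>j\<in>{..<d}. lam j \<odot>\<^bsub>L\<^esub> a j)"
  have SL: "S \<in> carrier L" unfolding S_def using l(1) a_L by (intro M.finsum_closed) auto
  have SA: "S \<in> A" unfolding S_def using l(1) a_A by (intro sub_finsum[OF A_sub]) auto
  have "y = lam d \<odot>\<^bsub>L\<^esub> X d \<oplus>\<^bsub>L\<^esub> (\<Oplus>\<^bsub>L\<^esub>j\<in>{..<d}. lam j \<odot>\<^bsub>L\<^esub> X j)"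
  proof -
    have dI: "{..d} = insert d {..<d}" by auto
    show ?thesis unfolding y_def dI using lp XL by (intro M.finsum_insert) (auto simp: Pi_iff)
  qed
  also have "(\<Oplus>\<^bsub>L\<^esub>j\<in>{..<d}. lam j \<odot>\<^bsub>L\<^esub> X j) = S"
    unfolding S_def X_def using l(1) a_L by (intro M.finsum_cong') auto
  finally have yS: "y = lam d \<odot>\<^bsub>L\<^esub> x \<oplus>\<^bsub>L\<^esub> S" by (simp add: X_def)
  show ?thesis
  proof (cases "lam d = \<zero>")
    case True
    then have S0: "S = \<zero>\<^bsub>L\<^esub>" using yS y0 xL SL by simp
    have "\<exists>!c. c \<in> {..<d} \<rightarrow>\<^sub>E carrier R \<and> \<zero>\<^bsub>L\<^esub> = (\<Oplus>\<^bsub>L\<^esub>i\<in>{..<d}. c i \<odot>\<^bsub>L\<^esub> a i)"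
      using A_basis ideal_zero[OF A_sub] unfolding is_basis_def by blast
    moreover have "restrict lam {..<d} \<in> {..<d} \<rightarrow>\<^sub>E carrier R \<and> \<zero>\<^bsub>L\<^esub> = (\<Oplus>\<^bsub>L\<^esub>i\<in>{..<d}. restrict lam {..<d} i \<odot>\<^bsub>L\<^esub> a i)"
    proof
      show "restrict lam {..<d} \<in> {..<d} \<rightarrow>\<^sub>E carrier R" using l(1) by auto
      have "(\<Oplus>\<^bsub>L\<^esub>i\<in>{..<d}. restrict lam {..<d} i \<odot>\<^bsub>L\<^esub> a i) = S"
        unfolding S_def using l(1) a_L by (intro M.finsum_cong') auto
      then show "\<zero>\<^bsub>L\<^esub> = (\<Oplus>\<^bsub>L\<^esub>i\<in>{..<d}. restrict lam {..<d} i \<odot>\<^bsub>L\<^esub> a i)" using S0 by simp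
    qed
    moreover have "(\<lambda>i\<in>{..<d}. \<zero>) \<in> {..<d} \<rightarrow>\<^sub>E carrier R \<and> \<zero>\<^bsub>L\<^esub> = (\<Oplus>\<^bsub>L\<^esub>i\<in>{..<d}. (\<lambda>i\<in>{..<d}. \<zero>) i \<odot>\<^bsub>L\<^esub> a i)"
    proof
      show "(\<lambda>i\<in>{..<d}. \<zero>) \<in> {..<d} \<rightarrow>\<^sub>E carrier R" by auto
      have "(\<Oplus>\<^bsub>L\<^esub>i\<in>{..<d}. (\<lambda>i\<in>{..<d}. \<zero>) i \<odot>\<^bsub>L\<^esub> a i) = (\<Oplus>\<^bsub>L\<^esub>i\<in>{..<d}. \<zero>\<^bsub>L\<^esub>)"
        using a_L by (intro M.finsum_cong') auto
      then show "\<zero>\<^bsub>L\<^esub> = (\<Oplus>\<^bsub>L\<^esub>i\<in>{..<d}. (\<lambda>i\<in>{..<d}. \<zero>) i \<odot>\<^bsub>L\<^esub> a i)" by simp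
    qed
    ultimately have "restrict lam {..<d} = (\<lambda>i\<in>{..<d}. \<zero>)" by blast
    then have "\<forall>j<d. lam j = \<zero>" by (metis lessThan_iff restrict_apply')
    then have False using l(2) True by (metis atMost_iff le_neq_implies_less)
    then show ?thesis ..
  next
    case False
    have "lam d \<odot>\<^bsub>L\<^esub> x \<oplus>\<^bsub>L\<^esub> S = \<zero>\<^bsub>L\<^esub>" using yS y0 by simp
    then have "\<ominus>\<^bsub>L\<^esub> S = lam d \<odot>\<^bsub>L\<^esub> x" using SL xL l(1)[of d] by (intro M.minus_equality) auto
    moreover have "\<ominus>\<^bsub>L\<^esub> S \<in> A" using SA submoduleE(3)[OF A_sub] by blast
    ultimately show ?thesis using False l(1)[of d] by auto
  qed
qed

lemma B_ab: assumes x: "x \<in> B" and y: "y \<in> B" shows "br x y = \<zero>\<^bsub>L\<^esub>"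
proof -
  obtain c where c: "c \<in> carrier R" "c \<noteq> \<zero>" "c \<odot>\<^bsub>L\<^esub> x \<in> A" using B_sat[OF x] by blast
  obtain c' where c': "c' \<in> carrier R" "c' \<noteq> \<zero>" "c' \<odot>\<^bsub>L\<^esub> y \<in> A" using B_sat[OF y] by blast
  have xL: "x \<in> carrier L" and yL: "y \<in> carrier L" using x y B_L by auto
  have "br (c \<odot>\<^bsub>L\<^esub> x) (c' \<odot>\<^bsub>L\<^esub> y) = \<zero>\<^bsub>L\<^esub>" using A_ab c c' unfolding abelian_subset_def by blast
  moreover have "br (c \<odot>\<^bsub>L\<^esub> x) (c' \<odot>\<^bsub>L\<^esub> y) = c \<odot>\<^bsub>L\<^esub> br x (c' \<odot>\<^bsub>L\<^esub> y)"
    using c c' xL yL by (simp add: br_smult_l)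
  moreover have "br x (c' \<odot>\<^bsub>L\<^esub> y) = c' \<odot>\<^bsub>L\<^esub> br x y"
    using c c' xL yL by (simp add: br_smult_r)
  moreover have "c \<odot>\<^bsub>L\<^esub> (c' \<odot>\<^bsub>L\<^esub> br x y) = (c \<otimes> c') \<odot>\<^bsub>L\<^esub> br x y"
    using c c' xL yL by (simp add: smult_assoc1)
  ultimately have "(c \<otimes> c') \<odot>\<^bsub>L\<^esub> br x y = \<zero>\<^bsub>L\<^esub>" by simp
  moreover have "c \<otimes> c' \<noteq> \<zero>" using D.integral[of c c'] c c' by auto
  ultimately show ?thesis using torsion_free[of "c \<otimes> c'" "br x y"] c c' xL yL by simp
qed

lemma B_ideal: assumes z: "z \<in> carrier L" and x: "x \<in> B" shows "br z x \<in> B"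
proof -
  obtain c where c: "c \<in> carrier R" "c \<noteq> \<zero>" "c \<odot>\<^bsub>L\<^esub> x \<in> A" using B_sat[OF x] by blast
  have xL: "x \<in> carrier L" using x B_L by auto
  have "br z (c \<odot>\<^bsub>L\<^esub> x) \<in> A" using A_ideal c z unfolding lie_ideal_def by blast
  then have "F (br z (c \<odot>\<^bsub>L\<^esub> x)) = \<zero>" using A_B unfolding B_def by blast
  moreover have "F (br z (c \<odot>\<^bsub>L\<^esub> x)) = c \<otimes> F (br z x)" using c z xL by (simp add: br_smult_r F_smult)
  ultimately have "F (br z x) = \<zero>" using D.integral[of c "F (br z x)"] c z xL by auto
  then show ?thesis using z xL unfolding B_def by simp
qed

end

context zpmod begin
lemma resid_finsum: assumes J: "finite J" and f: "f \<in> J \<rightarrow> carrier R"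
  shows "(\<Oplus>j\<in>J. f j) m = (\<Sum>j\<in>J. f j m) mod int p ^ m"
  using J f
proof (induction J rule: finite_induct)
  case empty then show ?case by (simp add: zeroR)
next
  case (insert j J)
  have "(\<Oplus>j\<in>insert j J. f j) = f j \<oplus> (\<Oplus>j\<in>J. f j)"
    using insert by (intro R.finsum_insert) auto
  then have "(\<Oplus>j\<in>insert j J. f j) m = (f j m + (\<Oplus>j\<in>J. f j) m) mod int p ^ m"
    by (simp add: addR_at)
  also have "\<dots> = (f j m + (\<Sum>j\<in>J. f j m)) mod int p ^ m"
    using insert by (simp add: mod_add_right_eq)
  finally show ?case using insert by simp
qed

lemma smult_comm: "a \<in> carrier R \<Longrightarrow> b \<in> carrier R \<Longrightarrow> z \<in> carrier L \<Longrightarrow>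
   a \<odot>\<^bsub>L\<^esub> (b \<odot>\<^bsub>L\<^esub> z) = b \<odot>\<^bsub>L\<^esub> (a \<odot>\<^bsub>L\<^esub> z)"
  by (metis R.m_comm smult_assoc1)
end

context zplie begin
lemma br_expand: assumes a: "a \<in> carrier R" and b: "b \<in> carrier R" and t: "t \<in> carrier L"
  and x: "x \<in> carrier L" and y: "y \<in> carrier L"
  shows "br (a \<odot>\<^bsub>L\<^esub> t \<oplus>\<^bsub>L\<^esub> x) (b \<odot>\<^bsub>L\<^esub> t \<oplus>\<^bsub>L\<^esub> y) = a \<odot>\<^bsub>L\<^esub> br t y \<oplus>\<^bsub>L\<^esub> b \<odot>\<^bsub>L\<^esub> br x t \<oplus>\<^bsub>L\<^esub> br x y"
proof -
  have "br (a \<odot>\<^bsub>L\<^esub> t \<oplus>\<^bsub>L\<^esub> x) (b \<odot>\<^bsub>L\<^esub> t \<oplus>\<^bsub>L\<^esub> y) =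
     (br (a \<odot>\<^bsub>L\<^esub> t) (b \<odot>\<^bsub>L\<^esub> t) \<oplus>\<^bsub>L\<^esub> br (a \<odot>\<^bsub>L\<^esub> t) y) \<oplus>\<^bsub>L\<^esub> (br x (b \<odot>\<^bsub>L\<^esub> t) \<oplus>\<^bsub>L\<^esub> br x y)"
    using a b t x y by (simp add: br_add_l br_add_r M.a_ac)
  also have "br (a \<odot>\<^bsub>L\<^esub> t) (b \<odot>\<^bsub>L\<^esub> t) = \<zero>\<^bsub>L\<^esub>" using a b t by (simp add: br_smult_l br_smult_r)
  also have "br (a \<odot>\<^bsub>L\<^esub> t) y = a \<odot>\<^bsub>L\<^esub> br t y" using a t y by (simp add: br_smult_l)
  also have "br x (b \<odot>\<^bsub>L\<^esub> t) = b \<odot>\<^bsub>L\<^esub> br x t" using b t x by (simp add: br_smult_r)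
  finally show ?thesis using a b t x y by (simp add: M.a_ac)
qed
end

context zpna2 begin

definition mna :: "nat \<Rightarrow> nat" where "mna i = (if i = i0 then 0 else k)"
abbreviation Mna where "Mna \<equiv> Mset mna"

definition dvL :: "'a \<Rightarrow> 'a" where "dvL y = (SOME w. w \<in> carrier L \<and> y = pe p k \<odot>\<^bsub>L\<^esub> w)"
definition phi :: "'a \<Rightarrow> 'a" where "phi x = F x \<odot>\<^bsub>L\<^esub> t \<oplus>\<^bsub>L\<^esub> dvL (x \<ominus>\<^bsub>L\<^esub> F x \<odot>\<^bsub>L\<^esub> t)"

lemma dvL_eq: "w \<in> carrier L \<Longrightarrow> dvL (pe p k \<odot>\<^bsub>L\<^esub> w) = w"
proof -
  assume w: "w \<in> carrier L"
  have "\<exists>w'. w' \<in> carrier L \<and> pe p k \<odot>\<^bsub>L\<^esub> w = pe p k \<odot>\<^bsub>L\<^esub> w'" using w by blast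
  then have "dvL (pe p k \<odot>\<^bsub>L\<^esub> w) \<in> carrier L \<and> pe p k \<odot>\<^bsub>L\<^esub> w = pe p k \<odot>\<^bsub>L\<^esub> dvL (pe p k \<odot>\<^bsub>L\<^esub> w)"
    unfolding dvL_def by (rule someI_ex)
  then show ?thesis using div_cancel_L w by metis
qed

lemma F_ct: assumes c: "c \<in> carrier R" and w: "w \<in> B" shows "F (c \<odot>\<^bsub>L\<^esub> t \<oplus>\<^bsub>L\<^esub> w) = c"
  using c w B_L[OF w] F_add F_smult F_t unfolding B_def by simp

lemma pe_B: "w \<in> B \<Longrightarrow> pe p k \<odot>\<^bsub>L\<^esub> w \<in> B"
  using submoduleE(4)[OF B_sub] by simp

lemma decomp: assumes x: "x \<in> carrier L"
  shows "x \<ominus>\<^bsub>L\<^esub> F x \<odot>\<^bsub>L\<^esub> t \<in> B" "x = F x \<odot>\<^bsub>L\<^esub> t \<oplus>\<^bsub>L\<^esub> (x \<ominus>\<^bsub>L\<^esub> F x \<odot>\<^bsub>L\<^esub> t)"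
proof -
  have Fx: "F x \<in> carrier R" using x by simp
  have "F (x \<ominus>\<^bsub>L\<^esub> F x \<odot>\<^bsub>L\<^esub> t) = F x \<oplus> F (\<ominus>\<^bsub>L\<^esub> (F x \<odot>\<^bsub>L\<^esub> t))"
    using x Fx by (simp add: M.minus_eq F_add)
  also have "\<ominus>\<^bsub>L\<^esub> (F x \<odot>\<^bsub>L\<^esub> t) = (\<ominus> F x) \<odot>\<^bsub>L\<^esub> t" using Fx by (simp add: smult_l_minus)
  also have "F ((\<ominus> F x) \<odot>\<^bsub>L\<^esub> t) = \<ominus> F x" using Fx F_smult F_t by simp
  finally show "x \<ominus>\<^bsub>L\<^esub> F x \<odot>\<^bsub>L\<^esub> t \<in> B" using x Fx unfolding B_def by (simp add: R.r_neg)
  show "x = F x \<odot>\<^bsub>L\<^esub> t \<oplus>\<^bsub>L\<^esub> (x \<ominus>\<^bsub>L\<^esub> F x \<odot>\<^bsub>L\<^esub> t)"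
    using x Fx by (simp add: M.minus_eq M.a_ac M.r_neg)
qed

lemma M_intro: assumes c: "c \<in> carrier R" and w: "w \<in> carrier L"
  shows "c \<odot>\<^bsub>L\<^esub> t \<oplus>\<^bsub>L\<^esub> pe p k \<odot>\<^bsub>L\<^esub> w \<in> Mna"
  unfolding Mset_def
proof (intro CollectI conjI allI impI)
  show xL: "c \<odot>\<^bsub>L\<^esub> t \<oplus>\<^bsub>L\<^esub> pe p k \<odot>\<^bsub>L\<^esub> w \<in> carrier L" using c w by simp
  fix i assume i: "i < n"
  show "coords (c \<odot>\<^bsub>L\<^esub> t \<oplus>\<^bsub>L\<^esub> pe p k \<odot>\<^bsub>L\<^esub> w) i (mna i) = 0"
  proof (cases "i = i0")
    case True then show ?thesis using zero_at0R coords_closed[OF xL i] by (simp add: mna_def)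
  next
    case False
    have "coords (c \<odot>\<^bsub>L\<^esub> t \<oplus>\<^bsub>L\<^esub> pe p k \<odot>\<^bsub>L\<^esub> w) i = c \<otimes> \<zero> \<oplus> pe p k \<otimes> coords w i"
      using c w i False by (simp add: coords_add coords_smult coords_t)
    also have "\<dots> = pe p k \<otimes> coords w i" using c w i by simp
    finally show ?thesis using dvd_iffR[of "pe p k \<otimes> coords w i" k] False w i by (auto simp: mna_def)
  qed
qed

lemma M_decomp: assumes x: "x \<in> Mna" shows "\<exists>w\<in>B. x = F x \<odot>\<^bsub>L\<^esub> t \<oplus>\<^bsub>L\<^esub> pe p k \<odot>\<^bsub>L\<^esub> w"
proof -
  have xL: "x \<in> carrier L" using x unfolding Mset_def by simp
  define y where "y = x \<ominus>\<^bsub>L\<^esub> F x \<odot>\<^bsub>L\<^esub> t"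
  have yB: "y \<in> B" unfolding y_def by (rule decomp(1)[OF xL])
  have yL: "y \<in> carrier L" using yB B_L by blast
  have ci: "coords y i k = 0" if i: "i < n" "i \<noteq> i0" for i
  proof -
    have "coords y i = coords x i \<ominus> F x \<otimes> \<zero>"
      unfolding y_def using xL i by (simp add: coords_minus coords_smult coords_t)
    also have "\<dots> = coords x i" using xL i by (simp add: R.minus_eq)
    moreover have "coords x i (mna i) = 0" using x i unfolding Mset_def by blast
    ultimately show ?thesis using i by (simp add: mna_def)
  qed
  have "(F y) k = (\<Sum>i\<in>{..<n}. (g i \<otimes> coords y i) k) mod int p ^ k"
    unfolding Fg_def using g_closed yL by (intro resid_finsum) auto
  also have "(\<Sum>i\<in>{..<n}. (g i \<otimes> coords y i) k) = (\<Sum>i\<in>{..<n}. if i = i0 then (g i0 \<otimes> coords y i0) k else 0)"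
    by (intro sum.cong) (auto simp: mulR_at ci)
  also have "\<dots> = (g i0 \<otimes> coords y i0) k" using i0 by simp
  finally have "(F y) k = (g i0 \<otimes> coords y i0) k mod int p ^ k" .
  moreover have "(F y) k = 0" using yB unfolding B_def by (simp add: zeroR)
  moreover have "(g i0 \<otimes> coords y i0) k mod int p ^ k = (g i0 \<otimes> coords y i0) k"
    using boundsR[of "g i0 \<otimes> coords y i0" k] g_closed i0 yL by (simp add: mod_pos_pos_trivial)
  ultimately have gc: "(g i0 \<otimes> coords y i0) k = 0" by simp
  have "coords y i0 = u \<otimes> (g i0 \<otimes> coords y i0)"
    using gu u g_closed i0 yL by (metis R.m_assoc R.m_comm R.l_one coords_closed)
  then have "coords y i0 k = (u \<otimes> (g i0 \<otimes> coords y i0)) k" by (rule arg_cong)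
  also have "\<dots> = (u k * (g i0 \<otimes> coords y i0) k) mod int p ^ k" by (rule mulR_at)
  finally have ci0: "coords y i0 k = 0" using gc by simp
  have "\<And>i. i < n \<Longrightarrow> coords y i k = 0" using ci ci0 by metis
  then obtain w where w: "w \<in> carrier L" "y = pe p k \<odot>\<^bsub>L\<^esub> w" using L_div[OF yL] by blast
  have "pe p k \<otimes> F w = \<zero>" using yB w F_smult unfolding B_def by simp
  then have "F w = \<zero>" using D.integral[of "pe p k" "F w"] pe_nonzeroR w by auto
  then have wB: "w \<in> B" using w unfolding B_def by simp
  have "x = F x \<odot>\<^bsub>L\<^esub> t \<oplus>\<^bsub>L\<^esub> pe p k \<odot>\<^bsub>L\<^esub> w" using decomp(2)[OF xL] w unfolding y_def by simp
  then show ?thesis using wB by blast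
qed

lemma phi_eq: assumes c: "c \<in> carrier R" and w: "w \<in> B"
  shows "phi (c \<odot>\<^bsub>L\<^esub> t \<oplus>\<^bsub>L\<^esub> pe p k \<odot>\<^bsub>L\<^esub> w) = c \<odot>\<^bsub>L\<^esub> t \<oplus>\<^bsub>L\<^esub> w"
proof -
  have wL: "w \<in> carrier L" using w B_L by blast
  have F: "F (c \<odot>\<^bsub>L\<^esub> t \<oplus>\<^bsub>L\<^esub> pe p k \<odot>\<^bsub>L\<^esub> w) = c" using F_ct[OF c pe_B[OF w]] .
  have "(c \<odot>\<^bsub>L\<^esub> t \<oplus>\<^bsub>L\<^esub> pe p k \<odot>\<^bsub>L\<^esub> w) \<ominus>\<^bsub>L\<^esub> c \<odot>\<^bsub>L\<^esub> t = pe p k \<odot>\<^bsub>L\<^esub> w"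
    using c wL by (simp add: M.minus_eq M.a_ac M.r_neg)
  then show ?thesis unfolding phi_def F using dvL_eq[OF wL] by simp
qed

end

context zpna2 begin

lemma Mna_form: assumes x: "x \<in> Mna"
  obtains c w where "c \<in> carrier R" "w \<in> B" "x = c \<odot>\<^bsub>L\<^esub> t \<oplus>\<^bsub>L\<^esub> pe p k \<odot>\<^bsub>L\<^esub> w"
proof -
  have xL: "x \<in> carrier L" using x unfolding Mset_def by simp
  obtain w where "w \<in> B" "x = F x \<odot>\<^bsub>L\<^esub> t \<oplus>\<^bsub>L\<^esub> pe p k \<odot>\<^bsub>L\<^esub> w" using M_decomp[OF x] by blast
  then show ?thesis using that[of "F x" w] xL F_closed by blast
qed

lemma br_form: assumes c: "c \<in> carrier R" and c': "c' \<in> carrier R" and w: "w \<in> B" and w': "w' \<in> B"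
  shows "br (c \<odot>\<^bsub>L\<^esub> t \<oplus>\<^bsub>L\<^esub> pe p k \<odot>\<^bsub>L\<^esub> w) (c' \<odot>\<^bsub>L\<^esub> t \<oplus>\<^bsub>L\<^esub> pe p k \<odot>\<^bsub>L\<^esub> w') =
      \<zero> \<odot>\<^bsub>L\<^esub> t \<oplus>\<^bsub>L\<^esub> pe p k \<odot>\<^bsub>L\<^esub> (c \<odot>\<^bsub>L\<^esub> br t w' \<oplus>\<^bsub>L\<^esub> c' \<odot>\<^bsub>L\<^esub> br w t)"
    and "br (c \<odot>\<^bsub>L\<^esub> t \<oplus>\<^bsub>L\<^esub> w) (c' \<odot>\<^bsub>L\<^esub> t \<oplus>\<^bsub>L\<^esub> w') = c \<odot>\<^bsub>L\<^esub> br t w' \<oplus>\<^bsub>L\<^esub> c' \<odot>\<^bsub>L\<^esub> br w t"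
proof -
  have wL: "w \<in> carrier L" and wL': "w' \<in> carrier L" using w w' B_L by auto
  have pk: "pe p k \<in> carrier R" by simp
  have "br (c \<odot>\<^bsub>L\<^esub> t \<oplus>\<^bsub>L\<^esub> pe p k \<odot>\<^bsub>L\<^esub> w) (c' \<odot>\<^bsub>L\<^esub> t \<oplus>\<^bsub>L\<^esub> pe p k \<odot>\<^bsub>L\<^esub> w') =
     c \<odot>\<^bsub>L\<^esub> br t (pe p k \<odot>\<^bsub>L\<^esub> w') \<oplus>\<^bsub>L\<^esub> c' \<odot>\<^bsub>L\<^esub> br (pe p k \<odot>\<^bsub>L\<^esub> w) t \<oplus>\<^bsub>L\<^esub> br (pe p k \<odot>\<^bsub>L\<^esub> w) (pe p k \<odot>\<^bsub>L\<^esub> w')"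
    using c c' wL wL' by (intro br_expand) auto
  also have "br t (pe p k \<odot>\<^bsub>L\<^esub> w') = pe p k \<odot>\<^bsub>L\<^esub> br t w'" using wL' by (simp add: br_smult_r)
  also have "br (pe p k \<odot>\<^bsub>L\<^esub> w) t = pe p k \<odot>\<^bsub>L\<^esub> br w t" using wL by (simp add: br_smult_l)
  also have "br (pe p k \<odot>\<^bsub>L\<^esub> w) (pe p k \<odot>\<^bsub>L\<^esub> w') = \<zero>\<^bsub>L\<^esub>"
    using wL wL' B_ab[OF w w'] by (simp add: br_smult_l br_smult_r)
  also have "c \<odot>\<^bsub>L\<^esub> (pe p k \<odot>\<^bsub>L\<^esub> br t w') = pe p k \<odot>\<^bsub>L\<^esub> (c \<odot>\<^bsub>L\<^esub> br t w')"
    using c wL' by (intro smult_comm) auto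
  also have "c' \<odot>\<^bsub>L\<^esub> (pe p k \<odot>\<^bsub>L\<^esub> br w t) = pe p k \<odot>\<^bsub>L\<^esub> (c' \<odot>\<^bsub>L\<^esub> br w t)"
    using c' wL by (intro smult_comm) auto
  finally show "br (c \<odot>\<^bsub>L\<^esub> t \<oplus>\<^bsub>L\<^esub> pe p k \<odot>\<^bsub>L\<^esub> w) (c' \<odot>\<^bsub>L\<^esub> t \<oplus>\<^bsub>L\<^esub> pe p k \<odot>\<^bsub>L\<^esub> w') =
      \<zero> \<odot>\<^bsub>L\<^esub> t \<oplus>\<^bsub>L\<^esub> pe p k \<odot>\<^bsub>L\<^esub> (c \<odot>\<^bsub>L\<^esub> br t w' \<oplus>\<^bsub>L\<^esub> c' \<odot>\<^bsub>L\<^esub> br w t)"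
    using c c' wL wL' by (simp add: smult_r_distr)
  have "br (c \<odot>\<^bsub>L\<^esub> t \<oplus>\<^bsub>L\<^esub> w) (c' \<odot>\<^bsub>L\<^esub> t \<oplus>\<^bsub>L\<^esub> w') = c \<odot>\<^bsub>L\<^esub> br t w' \<oplus>\<^bsub>L\<^esub> c' \<odot>\<^bsub>L\<^esub> br w t \<oplus>\<^bsub>L\<^esub> br w w'"
    using c c' wL wL' by (intro br_expand) auto
  then show "br (c \<odot>\<^bsub>L\<^esub> t \<oplus>\<^bsub>L\<^esub> w) (c' \<odot>\<^bsub>L\<^esub> t \<oplus>\<^bsub>L\<^esub> w') = c \<odot>\<^bsub>L\<^esub> br t w' \<oplus>\<^bsub>L\<^esub> c' \<odot>\<^bsub>L\<^esub> br w t"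
    using B_ab[OF w w'] c c' wL wL' by simp
qed

lemma v_B: assumes c: "c \<in> carrier R" and c': "c' \<in> carrier R" and w: "w \<in> B" and w': "w' \<in> B"
  shows "c \<odot>\<^bsub>L\<^esub> br t w' \<oplus>\<^bsub>L\<^esub> c' \<odot>\<^bsub>L\<^esub> br w t \<in> B"
proof -
  have wL: "w \<in> carrier L" using w B_L by auto
  have "br t w' \<in> B" using B_ideal[OF t_closed w'] .
  moreover have "br w t \<in> B"
    using B_ideal[OF t_closed w] br_antisym[OF t_closed wL] submoduleE(3)[OF B_sub] by simp
  ultimately show ?thesis using c c' submoduleE(4,5)[OF B_sub] by blast
qed

lemma nonabelian_case: assumes nab: "\<not> (\<forall>x\<in>carrier L. \<forall>y\<in>carrier L. br x y = \<zero>\<^bsub>L\<^esub>)"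
  shows "\<exists>M \<phi>. simple_virtual_endo R L br M \<phi> \<and> lattice_index L M = p ^ (d * k)"
proof (intro exI conjI)
  show "lattice_index L Mna = p ^ (d * k)"
  proof -
    have "(\<Sum>i<n. mna i) = mna i0 + (\<Sum>i\<in>{..<n} - {i0}. mna i)"
      using i0 by (intro sum.remove) auto
    also have "(\<Sum>i\<in>{..<n} - {i0}. mna i) = (\<Sum>i\<in>{..<n} - {i0}. k)"
      by (intro sum.cong) (auto simp: mna_def)
    also have "\<dots> = d * k" using i0 n_def by simp
    finally have "(\<Sum>i<n. mna i) = d * k" by (simp add: mna_def)
    then show ?thesis unfolding lattice_index_def index_Mset power_sum[symmetric] by simp
  qed
  have BL: "\<And>w. w \<in> B \<Longrightarrow> w \<in> carrier L" using B_L by blast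
  have ve: "virtual_endo R L br Mna phi"
    unfolding virtual_endo_def lie_subalgebra_def
  proof (intro conjI ballI)
    show "submodule Mna R L" by (rule Mset_submodule)
    show "finite (a_rcosets\<^bsub>L\<^esub> Mna)" by (rule Mset_finite)
    fix x assume x: "x \<in> Mna"
    obtain c w where cw: "c \<in> carrier R" "w \<in> B" "x = c \<odot>\<^bsub>L\<^esub> t \<oplus>\<^bsub>L\<^esub> pe p k \<odot>\<^bsub>L\<^esub> w"
      using Mna_form[OF x] by blast
    have px: "phi x = c \<odot>\<^bsub>L\<^esub> t \<oplus>\<^bsub>L\<^esub> w" using phi_eq[OF cw(1,2)] cw(3) by simp
    show "phi x \<in> carrier L" using px cw BL by simp
    {
      fix y assume y: "y \<in> Mna"
      obtain c' w' where cw': "c' \<in> carrier R" "w' \<in> B" "y = c' \<odot>\<^bsub>L\<^esub> t \<oplus>\<^bsub>L\<^esub> pe p k \<odot>\<^bsub>L\<^esub> w'"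
        using Mna_form[OF y] by blast
      have py: "phi y = c' \<odot>\<^bsub>L\<^esub> t \<oplus>\<^bsub>L\<^esub> w'" using phi_eq[OF cw'(1,2)] cw'(3) by simp
      have vB: "c \<odot>\<^bsub>L\<^esub> br t w' \<oplus>\<^bsub>L\<^esub> c' \<odot>\<^bsub>L\<^esub> br w t \<in> B" by (rule v_B[OF cw(1) cw'(1) cw(2) cw'(2)])
      have bxy: "br x y = \<zero> \<odot>\<^bsub>L\<^esub> t \<oplus>\<^bsub>L\<^esub> pe p k \<odot>\<^bsub>L\<^esub> (c \<odot>\<^bsub>L\<^esub> br t w' \<oplus>\<^bsub>L\<^esub> c' \<odot>\<^bsub>L\<^esub> br w t)"
        unfolding cw(3) cw'(3) by (rule br_form(1)[OF cw(1) cw'(1) cw(2) cw'(2)])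
      show "br x y \<in> Mna" unfolding bxy using vB BL by (intro M_intro) auto
      show "phi (br x y) = br (phi x) (phi y)"
        unfolding bxy px py using phi_eq[OF R.zero_closed vB] br_form(2)[OF cw(1) cw'(1) cw(2) cw'(2)] vB BL
        by simp
      have wB: "w \<oplus>\<^bsub>L\<^esub> w' \<in> B" using cw(2) cw'(2) submoduleE(5)[OF B_sub] by blast
      have "x \<oplus>\<^bsub>L\<^esub> y = (c \<oplus> c') \<odot>\<^bsub>L\<^esub> t \<oplus>\<^bsub>L\<^esub> pe p k \<odot>\<^bsub>L\<^esub> (w \<oplus>\<^bsub>L\<^esub> w')"
        unfolding cw(3) cw'(3) using cw cw' BL by (simp add: smult_l_distr smult_r_distr M.a_ac)
      then show "phi (x \<oplus>\<^bsub>L\<^esub> y) = phi x \<oplus>\<^bsub>L\<^esub> phi y"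
        unfolding px py using phi_eq[OF _ wB, of "c \<oplus> c'"] cw cw' BL by (simp add: smult_l_distr M.a_ac)
    }
    fix a assume a: "a \<in> carrier R"
    have waB: "a \<odot>\<^bsub>L\<^esub> w \<in> B" using a cw(2) submoduleE(4)[OF B_sub] by blast
    have "a \<odot>\<^bsub>L\<^esub> x = (a \<otimes> c) \<odot>\<^bsub>L\<^esub> t \<oplus>\<^bsub>L\<^esub> pe p k \<odot>\<^bsub>L\<^esub> (a \<odot>\<^bsub>L\<^esub> w)"
      unfolding cw(3) using a cw BL by (simp add: smult_r_distr smult_assoc1 smult_comm)
    then show "phi (a \<odot>\<^bsub>L\<^esub> x) = a \<odot>\<^bsub>L\<^esub> phi x"
      unfolding px using phi_eq[OF _ waB, of "a \<otimes> c"] a cw BL by (simp add: smult_r_distr smult_assoc1)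
  qed
  show "simple_virtual_endo R L br Mna phi"
    unfolding simple_virtual_endo_def
  proof (intro conjI allI impI ve)
    fix I assume h: "lie_ideal R L br I \<and> phi_invariant L Mna phi I"
    have sub: "submodule I R L" using h unfolding lie_ideal_def by blast
    have Iid: "\<And>z q. z \<in> carrier L \<Longrightarrow> q \<in> I \<Longrightarrow> br z q \<in> I" using h unfolding lie_ideal_def by blast
    have "I \<subseteq> pow_dom L Mna phi (Suc 0)" using h unfolding phi_invariant_def by blast
    then have IM: "I \<subseteq> Mna" by auto
    have TI: "phi ` I \<subseteq> I" using h unfolding phi_invariant_def by blast
    have IL: "I \<subseteq> carrier L" using submoduleE(1)[OF sub] .
    have line: "x = F x \<odot>\<^bsub>L\<^esub> t" if x: "x \<in> I" for x
    proof -
      have xL: "x \<in> carrier L" using x IL by blast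
      define c where "c = F x"
      have c: "c \<in> carrier R" unfolding c_def using xL by simp
      define y0 where "y0 = x \<ominus>\<^bsub>L\<^esub> c \<odot>\<^bsub>L\<^esub> t"
      have y0B: "y0 \<in> B" unfolding y0_def c_def by (rule decomp(1)[OF xL])
      have xd: "x = c \<odot>\<^bsub>L\<^esub> t \<oplus>\<^bsub>L\<^esub> y0" unfolding y0_def c_def by (rule decomp(2)[OF xL])
      have claim: "\<exists>v\<in>B. y0 = pe p (k * j) \<odot>\<^bsub>L\<^esub> v \<and> (phi ^^ j) x = c \<odot>\<^bsub>L\<^esub> t \<oplus>\<^bsub>L\<^esub> v" for j
      proof (induction j)
        case 0
        have "y0 = pe p (k * 0) \<odot>\<^bsub>L\<^esub> y0" using y0B BL pe_zeroR by simp
        then show ?case using y0B xd by auto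
      next
        case (Suc j)
        then obtain v where v: "v \<in> B" "y0 = pe p (k * j) \<odot>\<^bsub>L\<^esub> v" "(phi ^^ j) x = c \<odot>\<^bsub>L\<^esub> t \<oplus>\<^bsub>L\<^esub> v" by blast
        have zI: "(phi ^^ j) x \<in> I" using iter_in[OF TI x] .
        then have zM: "(phi ^^ j) x \<in> Mna" using IM by blast
        obtain w where w: "w \<in> B" "(phi ^^ j) x = F ((phi ^^ j) x) \<odot>\<^bsub>L\<^esub> t \<oplus>\<^bsub>L\<^esub> pe p k \<odot>\<^bsub>L\<^esub> w"
          using M_decomp[OF zM] by blast
        have Fz: "F ((phi ^^ j) x) = c" using v(3) F_ct[OF c v(1)] by simp
        have "c \<odot>\<^bsub>L\<^esub> t \<oplus>\<^bsub>L\<^esub> v = c \<odot>\<^bsub>L\<^esub> t \<oplus>\<^bsub>L\<^esub> pe p k \<odot>\<^bsub>L\<^esub> w" using v(3) w(2) Fz by simp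
        then have vw: "v = pe p k \<odot>\<^bsub>L\<^esub> w" using c v(1) w(1) BL by simp
        have "(phi ^^ Suc j) x = phi (c \<odot>\<^bsub>L\<^esub> t \<oplus>\<^bsub>L\<^esub> pe p k \<odot>\<^bsub>L\<^esub> w)" using v(3) vw by simp
        also have "\<dots> = c \<odot>\<^bsub>L\<^esub> t \<oplus>\<^bsub>L\<^esub> w" by (rule phi_eq[OF c w(1)])
        finally have "(phi ^^ Suc j) x = c \<odot>\<^bsub>L\<^esub> t \<oplus>\<^bsub>L\<^esub> w" .
        moreover have "y0 = pe p (k * Suc j) \<odot>\<^bsub>L\<^esub> w"
          using v(2) vw pe_smult_smult[of w "k * j" k] w(1) BL by (simp add: add.commute)
        ultimately show ?case using w(1) by blast
      qed
      have "y0 = \<zero>\<^bsub>L\<^esub>"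
      proof (rule L_div_all_zero[of y0 "\<lambda>j. k * j"])
        show "y0 \<in> carrier L" using y0B BL by blast
        show "\<exists>y\<in>carrier L. y0 = pe p (k * j) \<odot>\<^bsub>L\<^esub> y" for j using claim[of j] BL by blast
        show "j \<le> k * j" for j using k1 by simp
      qed
      then show ?thesis using xd c unfolding c_def by simp
    qed
    have IB0: "q = \<zero>\<^bsub>L\<^esub>" if q: "q \<in> I" "q \<in> B" for q
    proof -
      have "q = F q \<odot>\<^bsub>L\<^esub> t" using line[OF q(1)] .
      moreover have "F q = \<zero>" using q(2) unfolding B_def by simp
      ultimately show ?thesis by simp
    qed
    have "x = \<zero>\<^bsub>L\<^esub>" if x: "x \<in> I" for x
    proof (rule ccontr)
      assume nz: "x \<noteq> \<zero>\<^bsub>L\<^esub>"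
      have xL: "x \<in> carrier L" using x IL by blast
      have xt: "x = F x \<odot>\<^bsub>L\<^esub> t" using line[OF x] .
      have Fx: "F x \<in> carrier R" "F x \<noteq> \<zero>" using xL nz xt by (auto simp del: F_closed) (simp add: xL)
      have zt: "br z t = \<zero>\<^bsub>L\<^esub>" if z: "z \<in> B" for z
      proof -
        have zL: "z \<in> carrier L" using z BL by blast
        have "br z x \<in> I" using Iid[OF zL x] .
        moreover have "br z x \<in> B"
          using B_ideal[OF xL z] br_antisym[OF xL zL] submoduleE(3)[OF B_sub] by simp
        ultimately have "br z x = \<zero>\<^bsub>L\<^esub>" using IB0 by blast
        then have "F x \<odot>\<^bsub>L\<^esub> br z t = \<zero>\<^bsub>L\<^esub>" using xt Fx zL by (metis br_smult_r t_closed)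
        then show ?thesis using torsion_free[OF Fx] zL by simp
      qed
      have "\<forall>a\<in>carrier L. \<forall>b\<in>carrier L. br a b = \<zero>\<^bsub>L\<^esub>"
      proof (intro ballI)
        fix a b assume a: "a \<in> carrier L" and b: "b \<in> carrier L"
        have aB: "a \<ominus>\<^bsub>L\<^esub> F a \<odot>\<^bsub>L\<^esub> t \<in> B" and bB: "b \<ominus>\<^bsub>L\<^esub> F b \<odot>\<^bsub>L\<^esub> t \<in> B"
          using decomp(1) a b by auto
        have "br a b = br (F a \<odot>\<^bsub>L\<^esub> t \<oplus>\<^bsub>L\<^esub> (a \<ominus>\<^bsub>L\<^esub> F a \<odot>\<^bsub>L\<^esub> t)) (F b \<odot>\<^bsub>L\<^esub> t \<oplus>\<^bsub>L\<^esub> (b \<ominus>\<^bsub>L\<^esub> F b \<odot>\<^bsub>L\<^esub> t))"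
          using decomp(2) a b by simp
        also have "\<dots> = F a \<odot>\<^bsub>L\<^esub> br t (b \<ominus>\<^bsub>L\<^esub> F b \<odot>\<^bsub>L\<^esub> t) \<oplus>\<^bsub>L\<^esub> F b \<odot>\<^bsub>L\<^esub> br (a \<ominus>\<^bsub>L\<^esub> F a \<odot>\<^bsub>L\<^esub> t) t
            \<oplus>\<^bsub>L\<^esub> br (a \<ominus>\<^bsub>L\<^esub> F a \<odot>\<^bsub>L\<^esub> t) (b \<ominus>\<^bsub>L\<^esub> F b \<odot>\<^bsub>L\<^esub> t)"
          using a b aB bB BL by (intro br_expand) auto
        also have "br t (b \<ominus>\<^bsub>L\<^esub> F b \<odot>\<^bsub>L\<^esub> t) = \<zero>\<^bsub>L\<^esub>"
          using br_antisym[OF BL[OF bB] t_closed] zt[OF bB] by simp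
        also have "br (a \<ominus>\<^bsub>L\<^esub> F a \<odot>\<^bsub>L\<^esub> t) t = \<zero>\<^bsub>L\<^esub>" using zt[OF aB] .
        also have "br (a \<ominus>\<^bsub>L\<^esub> F a \<odot>\<^bsub>L\<^esub> t) (b \<ominus>\<^bsub>L\<^esub> F b \<odot>\<^bsub>L\<^esub> t) = \<zero>\<^bsub>L\<^esub>" using B_ab[OF aB bB] .
        finally show "br a b = \<zero>\<^bsub>L\<^esub>" using a b by simp
      qed
      then show False using nab by blast
    qed
    then show "I = {\<zero>\<^bsub>L\<^esub>}" using ideal_zero[OF sub] by blast
  qed
qed

end

theorem proposition1p6:
  fixes p k d :: nat and L :: "(nat \<Rightarrow> int, 'a) module" and br :: "'a \<Rightarrow> 'a \<Rightarrow> 'a"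
  assumes "prime p" and "k \<ge> 1" and "d \<ge> 1"
    and "lie_lattice p L br (d + 1)"
    and "\<exists>A. lie_ideal (Zp p) L br A \<and> abelian_subset L br A \<and> free_rank (Zp p) L A d"
  shows "self_similar_of_index p L br (p ^ (d * k))"
proof -
  have lie: "lie_algebra (Zp p) L br" and fr: "free_rank (Zp p) L (carrier L) (d + 1)"
    using assms(4) unfolding lie_lattice_def by auto
  have md: "module (Zp p) L" using lie unfolding lie_algebra_def by blast
  obtain e where e: "is_basis (Zp p) L (carrier L) (Suc d) e" using fr unfolding free_rank_def by auto
  interpret Z: zplie "Zp p" L p "Suc d" e br d k
    by (intro zplie.intro zpmod.intro zplie_axioms.intro zpmod_axioms.intro md e assms lie) auto
  show ?thesis
  proof (cases "\<forall>x\<in>carrier L. \<forall>y\<in>carrier L. br x y = \<zero>\<^bsub>L\<^esub>")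
    case True
    then show ?thesis unfolding self_similar_of_index_def using Z.abelian_case by blast
  next
    case False
    obtain A where A: "lie_ideal (Zp p) L br A" "abelian_subset L br A" "free_rank (Zp p) L A d"
      using assms(5) by blast
    obtain a where a: "is_basis (Zp p) L A d a" using A(3) unfolding free_rank_def by auto
    interpret N: zpna "Zp p" L p "Suc d" e br d k A a
      by (intro zpna.intro zpna_axioms.intro Z.zplie_axioms A(1,2) a)
    obtain g i0 u where gu: "\<forall>i<Suc d. g i \<in> carrier (Zp p)" "i0 < Suc d" "u \<in> carrier (Zp p)"
      "g i0 \<otimes>\<^bsub>Zp p\<^esub> u = \<one>\<^bsub>Zp p\<^esub>" "\<forall>j<d. Z.Fg g (a j) = \<zero>\<^bsub>Zp p\<^esub>"
      using N.functional_exists by blast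
    interpret N2: zpna2 "Zp p" L p "Suc d" e br d k A a g i0 u
      by (intro zpna2.intro zpna2_axioms.intro N.zpna_axioms) (use gu in auto)
    show ?thesis unfolding self_similar_of_index_def using N2.nonabelian_case[OF False] by blast
  qed
qed


end
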